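(* The left ideals $I_H,I_V,I_D$ of $\mathbb Z[\Gamma^2]$ are finitely generated, namely $I_H=\langle (1+S,1),\,(1+U+U^2,1),\,(1,1-T)\rangle$, $I_V=\langle (1,1+S),\,(1,1+U+U^2),\,(1-US,1)\rangle$, and $I_D=\langle (1,1)+(S,S),\,(1,1)+(U,U)+(U^2,U^2)\rangle$.
   Context: $\Gamma=PSL_2(\mathbb Z)$ acting on $\mathbb P^1(\mathbb Q)$; $S=\pm\begin{pmatrix}0&-1\\1&0\end{pmatrix}$, $U=\pm\begin{pmatrix}0&1\\-1&1\end{pmatrix}$, $T=\pm\begin{pmatrix}1&1\\0&1\end{pmatrix}$, so $US=\pm\begin{pmatrix}1&0\\1&1\end{pmatrix}$. Identify $\mathbb Z[\Gamma^2]=\mathbb Z[\Gamma]\otimes\mathbb Z[\Gamma]$, writing $(a,b)=a\otimes b$; $\langle\cdots\rangle$ means the left ideal generated. Let $\Gamma_\infty=\{T^n\}$, $\Gamma_0=\{(US)^n\}$, and for $\gamma\in\Gamma$ let $\partial\gamma=[\gamma\infty]-[\gamma0]\in\mathbb Z[\mathbb P^1(\mathbb Q)]$. For $\sum_i\lambda_i(\alpha_i,\beta_i)\in\mathbb Z[\Gamma^2]$ with distinct pairs: it lies in $I_H$ iff $\sum_{i:\beta_i\in C}\lambda_i\partial\alpha_i=0$ for every $C\in\Gamma/\Gamma_\infty$; in $I_V$ iff $\sum_{i:\alpha_i\in C}\lambda_i\partial\beta_i=0$ for every $C\in\Gamma/\Gamma_0$; in $I_D$ iff $\sum_{i:\beta_i\alpha_i^{-1}=g}\lambda_i\partial\alpha_i=0$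 for every $g\in\Gamma$. *)

theory Defs
  imports Complex_Main "HOL-Library.Function_Algebras"
begin

text \<open>A matrix (a b; c d) is the tuple (a,b,c,d).  An element of PSL_2(Z) is
  represented by its unique sign-normalised representative of determinant 1
  (c > 0, or c = 0 and d > 0).\<close>

typedef psl = "{(a,b,c,d). (a::int)*d - b*c = 1 \<and> (0 < c \<or> (c = 0 \<and> 0 < d))}"
  by (rule exI[of _ "(1,0,0,1)"]) simp

fun mat_mul :: "int \<times> int \<times> int \<times> int \<Rightarrow> int \<times> int \<times> int \<times> int \<Rightarrow> int \<times> int \<times> int \<times> int" where
  "mat_mul (a,b,c,d) (e,f,g,h) = (a*e+b*g, a*f+b*h, c*e+d*g, c*f+d*h)"

fun sign_norm :: "int \<times> int \<times> int \<times> int \<Rightarrow> int \<times> int \<times> int \<times> int" where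
  "sign_norm (a,b,c,d) = (if 0 < c \<or> (c = 0 \<and> 0 < d) then (a,b,c,d) else (-a,-b,-c,-d))"

definition mk_psl :: "int \<times> int \<times> int \<times> int \<Rightarrow> psl" where
  "mk_psl m = Abs_psl (sign_norm m)"

definition pmul :: "psl \<Rightarrow> psl \<Rightarrow> psl" where
  "pmul x y = mk_psl (mat_mul (Rep_psl x) (Rep_psl y))"

definition pone :: psl where
  "pone = mk_psl (1,0,0,1)"

definition pinv :: "psl \<Rightarrow> psl" where
  "pinv x = (case Rep_psl x of (a,b,c,d) \<Rightarrow> mk_psl (d,-b,-c,a))"

definition ppow :: "psl \<Rightarrow> int \<Rightarrow> psl" where
  "ppow g n = (if 0 \<le> n then (pmul g ^^ nat n) pone else (pmul (pinv g) ^^ nat (-n)) pone)"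

definition S :: psl where "S = mk_psl (0,-1,1,0)"
definition U :: psl where "U = mk_psl (0,1,-1,1)"
definition T :: psl where "T = mk_psl (1,1,0,1)"

definition Gamma_inf :: "psl set" where "Gamma_inf = {ppow T n | n. True}"
definition Gamma_0 :: "psl set" where "Gamma_0 = {ppow (pmul U S) n | n. True}"

definition lcoset :: "psl \<Rightarrow> psl set \<Rightarrow> psl set" where
  "lcoset g H = {pmul g h | h. h \<in> H}"

datatype P1 = Inf | Fin rat

definition act :: "psl \<Rightarrow> P1 \<Rightarrow> P1" where
  "act g p = (case Rep_psl g of (a,b,c,d) \<Rightarrow>
     (case p of
        Inf \<Rightarrow> (if c = 0 then Inf else Fin (of_int a / of_int c))
      | Fin q \<Rightarrow> (if of_int c * q + of_int d = 0 then Inf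
                  else Fin ((of_int a * q + of_int b) / (of_int c * q + of_int d)))))"

text \<open>Elements of Z[P^1(Q)] are represented as functions P1 \<Rightarrow> int (finitely supported);
  \<open>bdry g = [g \<infinity>] - [g 0]\<close>.\<close>
definition bdry :: "psl \<Rightarrow> P1 \<Rightarrow> int" where
  "bdry g = (\<lambda>p. (if act g Inf = p then 1 else 0) - (if act g (Fin 0) = p then 1 else 0))"

text \<open>Elements: finitely supported functions (psl \<times> psl) \<Rightarrow> int; the pair (a,b) = a \<otimes> b
  is the basis element \<open>delta (a,b)\<close>.\<close>

definition ZG :: "(psl \<times> psl \<Rightarrow> int) set" where
  "ZG = {f. finite {x. f x \<noteq> 0}}"

definition delta :: "psl \<times> psl \<Rightarrow> psl \<times> psl \<Rightarrow> int" where
  "delta x = (\<lambda>z. if z = x then 1 else 0)"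

definition pmul2 :: "psl \<times> psl \<Rightarrow> psl \<times> psl \<Rightarrow> psl \<times> psl" where
  "pmul2 x y = (pmul (fst x) (fst y), pmul (snd x) (snd y))"

definition pinv2 :: "psl \<times> psl \<Rightarrow> psl \<times> psl" where
  "pinv2 x = (pinv (fst x), pinv (snd x))"

definition gmul :: "(psl \<times> psl \<Rightarrow> int) \<Rightarrow> (psl \<times> psl \<Rightarrow> int) \<Rightarrow> psl \<times> psl \<Rightarrow> int" where
  "gmul f g = (\<lambda>z. \<Sum>x\<in>{x. f x \<noteq> 0}. f x * g (pmul2 (pinv2 x) z))"

inductive_set left_ideal :: "(psl \<times> psl \<Rightarrow> int) set \<Rightarrow> (psl \<times> psl \<Rightarrow> int) set"
  for G where
  gen: "g \<in> G \<Longrightarrow> g \<in> left_ideal G"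
| zero: "(\<lambda>_. 0) \<in> left_ideal G"
| add: "x \<in> left_ideal G \<Longrightarrow> y \<in> left_ideal G \<Longrightarrow> x + y \<in> left_ideal G"
| lmult: "r \<in> ZG \<Longrightarrow> x \<in> left_ideal G \<Longrightarrow> gmul r x \<in> left_ideal G"

definition I_H :: "(psl \<times> psl \<Rightarrow> int) set" where
  "I_H = {f \<in> ZG. \<forall>C \<in> {lcoset g Gamma_inf | g. True}. \<forall>p.
            (\<Sum>x\<in>{x. f x \<noteq> 0 \<and> snd x \<in> C}. f x * bdry (fst x) p) = 0}"

definition I_V :: "(psl \<times> psl \<Rightarrow> int) set" where
  "I_V = {f \<in> ZG. \<forall>C \<in> {lcoset g Gamma_0 | g. True}. \<forall>p.
            (\<Sum>x\<in>{x. f x \<noteq> 0 \<and> fst x \<in> C}. f x * bdry (snd x) p) = 0}"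

definition I_D :: "(psl \<times> psl \<Rightarrow> int) set" where
  "I_D = {f \<in> ZG. \<forall>g. \<forall>p.
            (\<Sum>x\<in>{x. f x \<noteq> 0 \<and> pmul (snd x) (pinv (fst x)) = g}. f x * bdry (fst x) p) = 0}"

end

theory Submission
  imports Defs
begin

section \<open>Matrices\<close>

type_synonym m4 = "int \<times> int \<times> int \<times> int"

fun det4 :: "m4 \<Rightarrow> int" where "det4 (a,b,c,d) = a*d - b*c"
fun neg4 :: "m4 \<Rightarrow> m4" where "neg4 (a,b,c,d) = (-a,-b,-c,-d)"
fun adj4 :: "m4 \<Rightarrow> m4" where "adj4 (a,b,c,d) = (d,-b,-c,a)"

lemma det_mul: "det4 (mat_mul m n) = det4 m * det4 n"
  by (cases m; cases n) (simp add: algebra_simps)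
lemma mat_assoc: "mat_mul (mat_mul m n) p = mat_mul m (mat_mul n p)"
  by (cases m; cases n; cases p) (simp add: algebra_simps)
lemma mat_neg1: "mat_mul (neg4 m) n = neg4 (mat_mul m n)"
  by (cases m; cases n) (simp add: algebra_simps)
lemma mat_neg2: "mat_mul m (neg4 n) = neg4 (mat_mul m n)"
  by (cases m; cases n) (simp add: algebra_simps)
lemma det_neg: "det4 (neg4 m) = det4 m" by (cases m) simp
lemma neg_neg: "neg4 (neg4 m) = m" by (cases m) simp
lemma adj_neg: "adj4 (neg4 m) = neg4 (adj4 m)" by (cases m) simp
lemma det_adj: "det4 (adj4 m) = det4 m" by (cases m) (simp add: algebra_simps)
lemma mat_adj: "det4 m = 1 \<Longrightarrow> mat_mul m (adj4 m) = (1,0,0,1)"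
  by (cases m) (simp add: algebra_simps)
lemma adj_mat: "det4 m = 1 \<Longrightarrow> mat_mul (adj4 m) m = (1,0,0,1)"
  by (cases m) (simp add: algebra_simps)
lemma mat_id1: "mat_mul (1,0,0,1) m = m" by (cases m) simp
lemma mat_id2: "mat_mul m (1,0,0,1) = m" by (cases m) simp

lemma sign_norm_cases: "sign_norm m = m \<or> sign_norm m = neg4 m"
  by (cases m) auto

lemma sign_norm_mem: "det4 m = 1 \<Longrightarrow> sign_norm m \<in> {(a,b,c,d). (a::int)*d - b*c = 1 \<and> (0 < c \<or> (c = 0 \<and> 0 < d))}"
proof (cases m)
  case (fields a b c d)
  assume "det4 m = 1"
  hence "a*d - b*c = 1" using fields by simp
  moreover have "c = 0 \<Longrightarrow> d \<noteq> 0" using calculation by auto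
  ultimately show ?thesis using fields by (auto simp: algebra_simps)
qed

lemma Rep_mk: "det4 m = 1 \<Longrightarrow> Rep_psl (mk_psl m) = sign_norm m"
  unfolding mk_psl_def by (rule Abs_psl_inverse[OF sign_norm_mem])

lemma Rep_mk_cases: "det4 m = 1 \<Longrightarrow> Rep_psl (mk_psl m) = m \<or> Rep_psl (mk_psl m) = neg4 m"
  using Rep_mk sign_norm_cases by metis

lemma det_Rep: "det4 (Rep_psl x) = 1"
proof -
  obtain a b c d where r: "Rep_psl x = (a,b,c,d)" by (cases "Rep_psl x")
  show ?thesis using Rep_psl[of x] r by simp
qed

lemma mk_Rep: "mk_psl (Rep_psl x) = x"
proof -
  obtain a b c d where r: "Rep_psl x = (a,b,c,d)" by (cases "Rep_psl x")
  have "sign_norm (Rep_psl x) = Rep_psl x"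
    using Rep_psl[of x] r by auto
  thus ?thesis unfolding mk_psl_def by (simp add: Rep_psl_inverse)
qed

lemma mk_neg: "det4 m = 1 \<Longrightarrow> mk_psl (neg4 m) = mk_psl m"
proof -
  assume d: "det4 m = 1"
  obtain a b c e where m: "m = (a,b,c,e)" by (cases m)
  have de: "a*e - b*c = 1" using d m by simp
  have "c = 0 \<Longrightarrow> e \<noteq> 0" using de by auto
  hence "sign_norm (neg4 m) = sign_norm m" using m by auto
  thus ?thesis unfolding mk_psl_def by simp
qed

lemma mk_eq_iff: "det4 m = 1 \<Longrightarrow> det4 n = 1 \<Longrightarrow> mk_psl m = mk_psl n \<longleftrightarrow> (m = n \<or> m = neg4 n)"
proof
  assume d: "det4 m = 1" "det4 n = 1" and e: "mk_psl m = mk_psl n"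
  hence "sign_norm m = sign_norm n" using Rep_mk by metis
  thus "m = n \<or> m = neg4 n" using sign_norm_cases[of m] sign_norm_cases[of n] neg_neg by metis
next
  assume d: "det4 m = 1" "det4 n = 1" and "m = n \<or> m = neg4 n"
  thus "mk_psl m = mk_psl n" using mk_neg[of n] d by auto
qed

lemma psl_ex: "\<exists>m. x = mk_psl m \<and> det4 m = 1"
  using mk_Rep det_Rep by metis

lemma pmul_mk: "det4 m = 1 \<Longrightarrow> det4 n = 1 \<Longrightarrow> pmul (mk_psl m) (mk_psl n) = mk_psl (mat_mul m n)"
  unfolding pmul_def using Rep_mk_cases[of m] Rep_mk_cases[of n]
  by (auto simp: mat_neg1 mat_neg2 neg_neg mk_neg det_mul)

lemma pinv_mk: "det4 m = 1 \<Longrightarrow> pinv (mk_psl m) = mk_psl (adj4 m)"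
proof -
  assume d: "det4 m = 1"
  have "\<And>a b c e. Rep_psl (mk_psl m) = (a,b,c,e) \<Longrightarrow> mk_psl (e,-b,-c,a) = mk_psl (adj4 m)"
  proof -
    fix a b c e assume r: "Rep_psl (mk_psl m) = (a,b,c,e)"
    have "(e,-b,-c,a) = adj4 (Rep_psl (mk_psl m))" using r by simp
    thus "mk_psl (e,-b,-c,a) = mk_psl (adj4 m)"
      using Rep_mk_cases[OF d] by (auto simp: adj_neg mk_neg det_adj d)
  qed
  thus ?thesis unfolding pinv_def by (auto split: prod.split)
qed

lemma pone_mk: "pone = mk_psl (1,0,0,1)" by (simp add: pone_def)

lemma pmul_assoc: "pmul (pmul x y) z = pmul x (pmul y z)"
proof -
  obtain m n p where "x = mk_psl m" "y = mk_psl n" "z = mk_psl p" "det4 m = 1" "det4 n = 1" "det4 p = 1"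
    using psl_ex by metis
  thus ?thesis by (simp add: pmul_mk det_mul mat_assoc)
qed

lemma pmul_pone1[simp]: "pmul pone x = x"
proof -
  obtain m where "x = mk_psl m" "det4 m = 1" using psl_ex by metis
  thus ?thesis by (simp add: pone_mk pmul_mk mat_id1)
qed

lemma pmul_pone2[simp]: "pmul x pone = x"
proof -
  obtain m where "x = mk_psl m" "det4 m = 1" using psl_ex by metis
  thus ?thesis by (simp add: pone_mk pmul_mk mat_id2)
qed

lemma pinv_l[simp]: "pmul (pinv x) x = pone"
proof -
  obtain m where "x = mk_psl m" "det4 m = 1" using psl_ex by metis
  thus ?thesis by (simp add: pone_mk pmul_mk pinv_mk det_adj adj_mat)
qed

lemma pinv_r[simp]: "pmul x (pinv x) = pone"
proof -
  obtain m where "x = mk_psl m" "det4 m = 1" using psl_ex by metis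
  thus ?thesis by (simp add: pone_mk pmul_mk pinv_mk det_adj mat_adj)
qed

lemma pmul_assoc_simp[simp]: "pmul (pmul x y) z = pmul x (pmul y z)" by (rule pmul_assoc)

lemma pinv_l2[simp]: "pmul (pinv x) (pmul x y) = y"
  by (metis pmul_assoc pinv_l pmul_pone1)
lemma pinv_r2[simp]: "pmul x (pmul (pinv x) y) = y"
  by (metis pmul_assoc pinv_r pmul_pone1)

lemma pinv_unique: "pmul x y = pone \<Longrightarrow> pinv x = y"
  by (metis pinv_l2 pmul_pone2)

lemma pinv_pinv[simp]: "pinv (pinv x) = x"
  using pinv_unique[of "pinv x" x] by simp
lemma pinv_pmul[simp]: "pinv (pmul x y) = pmul (pinv y) (pinv x)"
  by (rule pinv_unique) simp
lemma pinv_pone[simp]: "pinv pone = pone"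
  by (rule pinv_unique) simp

lemma pmul_cancel_l[simp]: "pmul x y = pmul x z \<longleftrightarrow> y = z"
  by (metis pinv_l2)
lemma pmul_cancel_r[simp]: "pmul y x = pmul z x \<longleftrightarrow> y = z"
  by (metis pmul_assoc pinv_r pmul_pone2)

lemma pmul_eq_iff: "pmul x y = z \<longleftrightarrow> y = pmul (pinv x) z"
  by auto
lemma pmul_eq_iff2: "pmul y x = z \<longleftrightarrow> y = pmul z (pinv x)"
  by (metis pmul_assoc pinv_r pmul_pone2 pinv_l)


definition pt :: "int \<Rightarrow> int \<Rightarrow> P1" where
  "pt x y = (if y = 0 then Inf else Fin (of_int x / of_int y))"

lemma pt_neg[simp]: "pt (-x) (-y) = pt x y"
  unfolding pt_def by simp

lemma pt_Inf[simp]: "pt x 0 = Inf" by (simp add: pt_def)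

lemma act_rep:
  assumes r: "Rep_psl g = (a,b,c,d)" and nz: "(x,y) \<noteq> (0,0)" and de: "a*d - b*c = 1"
  shows "act g (pt x y) = pt (a*x+b*y) (c*x+d*y)"
proof (cases "y = 0")
  case True
  hence x: "x \<noteq> 0" using nz by auto
  show ?thesis using True x by (simp add: act_def r pt_def)
next
  case False
  let ?q = "(of_int x / of_int y :: rat)"
  have yq: "(of_int y :: rat) \<noteq> 0" using False by simp
  have e1: "of_int c * ?q + of_int d = (of_int (c*x+d*y)) / of_int y"
    using yq by (simp add: field_simps)
  have e2: "of_int a * ?q + of_int b = (of_int (a*x+b*y)) / of_int y"
    using yq by (simp add: field_simps)
  have z: "of_int c * ?q + of_int d = 0 \<longleftrightarrow> c*x+d*y = 0"
  proof -
    have "of_int c * ?q + of_int d = 0 \<longleftrightarrow> (of_int (c*x+d*y) :: rat) = 0"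
      using e1 yq by simp
    also have "\<dots> \<longleftrightarrow> c*x+d*y = 0" by (rule of_int_eq_0_iff)
    finally show ?thesis .
  qed
  show ?thesis
  proof (cases "c*x+d*y = 0")
    case True thus ?thesis using False z by (simp add: act_def r pt_def)
  next
    case F2: False
    have "(of_int a * ?q + of_int b) / (of_int c * ?q + of_int d) = of_int (a*x+b*y) / (of_int (c*x+d*y) :: rat)"
      using e1 e2 yq F2 by simp
    thus ?thesis using False z F2 by (simp add: act_def r pt_def)
  qed
qed

lemma act_mk:
  assumes de: "a*d - b*c = 1" and nz: "(x,y) \<noteq> (0,0)"
  shows "act (mk_psl (a,b,c,d)) (pt x y) = pt (a*x+b*y) (c*x+d*y)"
proof -
  have d4: "det4 (a,b,c,d) = 1" using de by simp
  from Rep_mk_cases[OF d4] show ?thesis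
  proof
    assume "Rep_psl (mk_psl (a,b,c,d)) = (a,b,c,d)"
    thus ?thesis using act_rep[OF _ nz de] by simp
  next
    assume r: "Rep_psl (mk_psl (a,b,c,d)) = neg4 (a,b,c,d)"
    have "act (mk_psl (a,b,c,d)) (pt x y) = pt ((-a)*x+(-b)*y) ((-c)*x+(-d)*y)"
      using act_rep[OF _ nz, of _ "-a" "-b" "-c" "-d"] r de by simp
    also have "\<dots> = pt (a*x+b*y) (c*x+d*y)"
      using pt_neg[of "a*x+b*y" "c*x+d*y"] by (simp add: algebra_simps)
    finally show ?thesis .
  qed
qed

lemma P1_pt: "\<exists>x y. (x,y) \<noteq> (0,0) \<and> p = pt x y"
proof (cases p)
  case Inf thus ?thesis by (intro exI[of _ 1] exI[of _ 0]) simp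
next
  case (Fin q)
  obtain x y where qo: "quotient_of q = (x,y)" by (cases "quotient_of q")
  have "y > 0" using quotient_of_denom_pos[OF qo] .
  moreover have "q = of_int x / of_int y" using quotient_of_div[OF qo] .
  ultimately show ?thesis using Fin by (intro exI[of _ x] exI[of _ y]) (simp add: pt_def)
qed

lemma act_Inf: "a*d - b*c = 1 \<Longrightarrow> act (mk_psl (a,b,c,d)) Inf = pt a c"
  using act_mk[of a d b c 1 0] by simp
lemma pt_00: "pt 0 1 = Fin 0" by (simp add: pt_def)
lemma pt_11: "pt 1 1 = Fin 1" by (simp add: pt_def)
lemma act_0: "a*d - b*c = 1 \<Longrightarrow> act (mk_psl (a,b,c,d)) (Fin 0) = pt b d"
  using act_mk[of a d b c 0 1] by (simp add: pt_00)
lemma act_1: "a*d - b*c = 1 \<Longrightarrow> act (mk_psl (a,b,c,d)) (Fin 1) = pt (a+b) (c+d)"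
  using act_mk[of a d b c 1 1] by (simp add: pt_11)

lemma mat_vec_nz:
  assumes "a*d - b*c = (1::int)" "(x,y) \<noteq> (0,0)"
  shows "(a*x+b*y, c*x+d*y) \<noteq> (0,0)"
proof
  assume h: "(a*x+b*y, c*x+d*y) = (0,0)"
  hence "d*(a*x+b*y) - b*(c*x+d*y) = 0" "a*(c*x+d*y) - c*(a*x+b*y) = 0" by auto
  hence "(a*d-b*c)*x = 0" "(a*d-b*c)*y = 0" by (simp_all add: algebra_simps)
  thus False using assms by simp
qed

lemma act_pmul: "act (pmul g h) p = act g (act h p)"
proof -
  obtain m where gm: "g = mk_psl m" "det4 m = 1" using psl_ex by metis
  obtain n where hn: "h = mk_psl n" "det4 n = 1" using psl_ex by metis
  obtain x y where p: "(x,y) \<noteq> (0,0)" "p = pt x y" using P1_pt by metis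
  obtain a b c d where m: "m = (a,b,c,d)" by (cases m)
  obtain e f k l where n: "n = (e,f,k,l)" by (cases n)
  have dm: "a*d - b*c = 1" using gm m by simp
  have dn: "e*l - f*k = 1" using hn n by simp
  have dmn: "det4 (mat_mul m n) = 1" using gm hn det_mul by simp
  have dmn': "(a*e+b*k)*(c*f+d*l) - (a*f+b*l)*(c*e+d*k) = 1" using dmn m n by simp
  have "act (pmul g h) p = act (mk_psl (mat_mul m n)) (pt x y)" using gm hn p pmul_mk by simp
  also have "\<dots> = pt ((a*e+b*k)*x+(a*f+b*l)*y) ((c*e+d*k)*x+(c*f+d*l)*y)"
    using act_mk[OF dmn' p(1)] m n by simp
  also have "\<dots> = act g (pt (e*x+f*y) (k*x+l*y))"
    using act_mk[OF dm mat_vec_nz[OF dn p(1)]] gm m by (simp add: algebra_simps)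
  also have "\<dots> = act g (act h p)"
    using act_mk[OF dn p(1)] hn n p by simp
  finally show ?thesis .
qed

lemma act_pone[simp]: "act pone p = p"
proof -
  obtain x y where p: "(x,y) \<noteq> (0,0)" "p = pt x y" using P1_pt by metis
  thus ?thesis using act_mk[of 1 1 0 0 x y] by (simp add: pone_mk)
qed

lemma act_eq_iff: "act g x = p \<longleftrightarrow> x = act (pinv g) p"
  by (metis act_pmul act_pone pinv_l pinv_r)

lemma bdry_pmul: "bdry (pmul a g) p = bdry g (act (pinv a) p)"
  unfolding bdry_def by (simp add: act_pmul act_eq_iff)


definition dl :: "psl \<Rightarrow> psl \<Rightarrow> int" where "dl g = (\<lambda>z. if z = g then 1 else 0)"

inductive_set Ksp :: "(psl \<Rightarrow> int) set" where
  K0: "(\<lambda>_. 0) \<in> Ksp"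
| Kadd: "x \<in> Ksp \<Longrightarrow> y \<in> Ksp \<Longrightarrow> x + y \<in> Ksp"
| Kneg: "x \<in> Ksp \<Longrightarrow> -x \<in> Ksp"
| KS: "dl g + dl (pmul g S) \<in> Ksp"
| KU: "dl g + dl (pmul g U) + dl (pmul g (pmul U U)) \<in> Ksp"

lemma Kdiff: "x \<in> Ksp \<Longrightarrow> y \<in> Ksp \<Longrightarrow> x - y \<in> Ksp"
proof -
  assume "x \<in> Ksp" "y \<in> Ksp"
  hence "x + (-y) \<in> Ksp" by (intro Kadd Kneg)
  thus ?thesis by (simp only: diff_conv_add_uminus)
qed

lemma Ksp_scal: "v \<in> Ksp \<Longrightarrow> (\<lambda>z. k * v z) \<in> Ksp"
proof -
  assume v: "v \<in> Ksp"
  have nat: "(\<lambda>z. int n * v z) \<in> Ksp" for n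
  proof (induction n)
    case 0 thus ?case using K0 by simp
  next
    case (Suc n)
    have "(\<lambda>z. int (Suc n) * v z) = (\<lambda>z. int n * v z) + v" by (auto simp: algebra_simps)
    thus ?case using Kadd[OF Suc v] by simp
  qed
  show ?thesis
  proof (cases "k \<ge> 0")
    case True thus ?thesis using nat[of "nat k"] by simp
  next
    case False
    have e1: "(\<lambda>z. int (nat (-k)) * v z) = (\<lambda>z. (-k) * v z)" using False by simp
    have e2: "(\<lambda>z. k * v z) = - (\<lambda>z. (-k) * v z)" by auto
    show ?thesis unfolding e2 using Kneg[OF nat[of "nat (-k)"]] e1 by simp
  qed
qed

lemma Ksp_sum: "finite A \<Longrightarrow> (\<And>a. a \<in> A \<Longrightarrow> u a \<in> Ksp) \<Longrightarrow> (\<lambda>z. \<Sum>a\<in>A. c a * u a z) \<in> Ksp"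
proof (induction A rule: finite_induct)
  case empty thus ?case using K0 by simp
next
  case (insert x F)
  have "(\<lambda>z. \<Sum>a\<in>insert x F. c a * u a z) = (\<lambda>z. c x * u x z) + (\<lambda>z. \<Sum>a\<in>F. c a * u a z)"
    using insert by auto
  moreover have "(\<lambda>z. c x * u x z) \<in> Ksp" using Ksp_scal insert.prems by simp
  moreover have "(\<lambda>z. \<Sum>a\<in>F. c a * u a z) \<in> Ksp" using insert.IH insert.prems by simp
  ultimately show ?case using Kadd by simp
qed

section \<open>Canonical matrices\<close>

definition cc :: "rat \<Rightarrow> int" where
  "cc q = (SOME c. 0 \<le> c \<and> c < snd (quotient_of q) \<and> snd (quotient_of q) dvd (fst (quotient_of q) * c + 1))"
definition ca :: "rat \<Rightarrow> int" where
  "ca q = (fst (quotient_of q) * cc q + 1) div snd (quotient_of q)"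
definition cg :: "rat \<Rightarrow> psl" where
  "cg q = mk_psl (ca q, fst (quotient_of q), cc q, snd (quotient_of q))"

lemma inv_exists:
  assumes "coprime b d" "(d::int) > 0"
  shows "\<exists>c. 0 \<le> c \<and> c < d \<and> d dvd (b * c + 1)"
proof -
  obtain u v where uv: "u * b + v * d = 1" using bezout_int[of b d] assms(1) by auto
  let ?c = "(-u) mod d"
  have ce: "-u = ((-u) div d) * d + ?c" by simp
  have "b * ?c + 1 = d * (v - b * ((-u) div d))" using ce uv by algebra
  hence "d dvd (b * ?c + 1)" by simp
  moreover have "0 \<le> ?c" "?c < d" using assms(2) by auto
  ultimately show ?thesis by blast
qed

lemma canon:
  fixes q
  defines "b \<equiv> fst (quotient_of q)" and "d \<equiv> snd (quotient_of q)"
  shows "d > 0" "coprime b d" "0 \<le> cc q" "cc q < d" "ca q * d - b * cc q = 1"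
proof -
  show d0: "d > 0" unfolding d_def by (rule quotient_of_denom_pos')
  show cop: "coprime b d" unfolding b_def d_def using quotient_of_coprime[of q] by (cases "quotient_of q") auto
  have "0 \<le> cc q \<and> cc q < d \<and> d dvd (b * cc q + 1)"
    unfolding cc_def b_def[symmetric] d_def[symmetric] using inv_exists[OF cop d0] by (rule someI_ex)
  thus "0 \<le> cc q" "cc q < d" by auto
  from \<open>0 \<le> cc q \<and> cc q < d \<and> d dvd (b * cc q + 1)\<close> have "d dvd (b * cc q + 1)" by auto
  hence "(b * cc q + 1) div d * d = b * cc q + 1" by simp
  thus "ca q * d - b * cc q = 1" unfolding ca_def b_def[symmetric] d_def[symmetric] by simp
qed

lemma q_eq: "q = of_int (fst (quotient_of q)) / of_int (snd (quotient_of q))"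
  using quotient_of_div[of q] by (cases "quotient_of q") auto

lemma quot_div: "c > 0 \<Longrightarrow> coprime a c \<Longrightarrow> quotient_of (of_int a / of_int c) = (a, c)"
  by (simp add: Fract_of_int_quotient[symmetric] quotient_of_Fract)

lemma coprime_det: "a*d - b*c = (1::int) \<Longrightarrow> coprime a c"
proof (rule coprimeI)
  fix k assume h: "a*d - b*c = 1" "k dvd a" "k dvd c"
  obtain a1 where a1: "a = k*a1" using h(2) by (auto elim: dvdE)
  obtain c1 where c1: "c = k*c1" using h(3) by (auto elim: dvdE)
  have "1 = k*(a1*d - b*c1)" using h(1) a1 c1 by (simp add: algebra_simps)
  thus "is_unit k" by (rule dvdI)
qed

fun den :: "P1 \<Rightarrow> nat" where
  "den Inf = 0"
| "den (Fin q) = nat (snd (quotient_of q))"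

lemma den_decr: "den (pt (ca q) (cc q)) < den (Fin q)"
proof (cases "cc q = 0")
  case True thus ?thesis using canon(1)[of q] by simp
next
  case False
  hence cpos: "cc q > 0" using canon(3)[of q] by simp
  have cop: "coprime (ca q) (cc q)" using coprime_det[OF canon(5)[of q]] .
  have "pt (ca q) (cc q) = Fin (of_int (ca q) / of_int (cc q))" using False by (simp add: pt_def)
  thus ?thesis using quot_div[OF cpos cop] canon(4)[of q] cpos by simp
qed

function Fm :: "P1 \<Rightarrow> psl \<Rightarrow> int" where
  "Fm Inf = (\<lambda>_. 0)"
| "Fm (Fin q) = Fm (pt (ca q) (cc q)) - dl (cg q)"
  by pat_completeness auto
termination
  apply (relation "measure den")
   apply simp
  using den_decr by simp

declare Fm.simps[simp del]

definition Eg :: "psl \<Rightarrow> psl \<Rightarrow> int" where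
  "Eg g = Fm (act g Inf) - Fm (act g (Fin 0)) - dl g"

lemma S_mk: "S = mk_psl (0,-1,1,0)" by (simp add: S_def)
lemma U_mk: "U = mk_psl (0,1,-1,1)" by (simp add: U_def)
lemma UU_mk: "pmul U U = mk_psl (-1,1,-1,0)" by (simp add: U_def pmul_mk)
lemma T_mk: "T = mk_psl (1,1,0,1)" by (simp add: T_def)

lemma act_S_Inf: "act S Inf = Fin 0" using act_Inf[of 0 0 "-1" 1] by (simp add: S_mk pt_def)
lemma act_S_0: "act S (Fin 0) = Inf" using act_0[of 0 0 "-1" 1] by (simp add: S_mk)
lemma act_U_Inf: "act U Inf = Fin 0" using act_Inf[of 0 1 1 "-1"] by (simp add: U_mk pt_def)
lemma act_U_0: "act U (Fin 0) = Fin 1" using act_0[of 0 1 1 "-1"] by (simp add: U_mk pt_def)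
lemma act_U_1: "act U (Fin 1) = Inf" using act_1[of 0 1 1 "-1"] by (simp add: U_mk pt_def)
lemma act_UU_Inf: "act (pmul U U) Inf = Fin 1" using act_Inf[of "-1" 0 1 "-1"] by (simp add: UU_mk pt_def)
lemma act_UU_0: "act (pmul U U) (Fin 0) = Inf" using act_0[of "-1" 0 1 "-1"] by (simp add: UU_mk pt_def)

lemma PS: "Eg (pmul g S) \<in> Ksp \<longleftrightarrow> Eg g \<in> Ksp"
proof -
  have e: "Eg (pmul g S) = - Eg g - (dl g + dl (pmul g S))"
    unfolding Eg_def by (simp add: act_pmul act_S_Inf act_S_0 algebra_simps)
  have e2: "Eg g = - Eg (pmul g S) - (dl g + dl (pmul g S))"
    unfolding e by simp
  show ?thesis
  proof
    assume "Eg (pmul g S) \<in> Ksp" thus "Eg g \<in> Ksp" unfolding e2 by (intro Kdiff Kneg KS)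
  next
    assume "Eg g \<in> Ksp" thus "Eg (pmul g S) \<in> Ksp" unfolding e by (intro Kdiff Kneg KS)
  qed
qed

lemma PU: "Eg (pmul g U) \<in> Ksp \<Longrightarrow> Eg (pmul g (pmul U U)) \<in> Ksp \<Longrightarrow> Eg g \<in> Ksp"
proof -
  assume a: "Eg (pmul g U) \<in> Ksp" "Eg (pmul g (pmul U U)) \<in> Ksp"
  have e: "Eg g = - (dl g + dl (pmul g U) + dl (pmul g (pmul U U))) - Eg (pmul g U) - Eg (pmul g (pmul U U))"
    unfolding Eg_def by (simp add: act_pmul act_U_Inf act_U_0 act_U_1 algebra_simps
        del: pmul_assoc_simp)
  show ?thesis unfolding e by (intro Kdiff Kneg KU a)
qed

lemma Pcanon: "Eg (cg q) \<in> Ksp"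
proof -
  have d: "ca q * snd (quotient_of q) - fst (quotient_of q) * cc q = 1" using canon(5) .
  have "act (cg q) (Fin 0) = Fin q"
    unfolding cg_def using act_0[OF d] canon(1)[of q] q_eq[of q] by (simp add: pt_def)
  moreover have "act (cg q) Inf = pt (ca q) (cc q)"
    unfolding cg_def using act_Inf[OF d] by simp
  ultimately have "Eg (cg q) = 0"
    unfolding Eg_def by (simp add: Fm.simps)
  thus ?thesis using K0 unfolding zero_fun_def by simp
qed


lemma dvd_small: "(d::int) > 0 \<Longrightarrow> d dvd x \<Longrightarrow> -d < x \<Longrightarrow> x < d \<Longrightarrow> x = 0"
proof (rule ccontr)
  assume h: "d > 0" "d dvd x" "-d < x" "x < d" "x \<noteq> 0"
  hence "\<bar>d\<bar> \<le> \<bar>x\<bar>" using dvd_imp_le_int[of x d] by simp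
  moreover have "\<bar>x\<bar> < d" using h by simp
  ultimately show False using h by simp
qed

lemma quot_bd: "a*d - b*c = 1 \<Longrightarrow> d > 0 \<Longrightarrow> quotient_of (of_int b / of_int d) = (b,d)"
  using coprime_det[of b "-c" "-a" d] quot_div[of d b] by (simp add: algebra_simps)

lemma key_dvd:
  fixes a b c d a' c' :: int
  assumes "a*d - b*c = 1" "a'*d - b*c' = 1" "coprime b d"
  shows "d dvd (c - c')"
proof -
  have e: "b*(c - c') = b*c - b*c'" "(a-a')*d = a*d - a'*d" by (simp_all add: algebra_simps)
  have h1: "b*c = a*d - 1" "b*c' = a'*d - 1" using assms(1,2) by (simp_all add: algebra_simps)
  have "b*(c - c') = (a - a')*d" by (simp add: right_diff_distrib left_diff_distrib h1)
  hence "d dvd b*(c - c')" by simp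
  thus ?thesis using assms(3) coprime_dvd_mult_right_iff[of d b] by (simp add: coprime_commute)
qed

lemma L1:
  assumes de: "a*d - b*c = 1" and d0: "d > 0" and c0: "0 \<le> c" "c < d"
  shows "Eg (mk_psl (a,b,c,d)) \<in> Ksp"
proof -
  define q where "q = (of_int b / of_int d :: rat)"
  have qo: "quotient_of q = (b,d)" unfolding q_def using quot_bd[OF de d0] .
  have cop: "coprime b d" using coprime_det[of b "-c" "-a" d] de by (simp add: algebra_simps)
  have c1: "0 \<le> cc q" "cc q < d" "ca q * d - b * cc q = 1" using canon[of q] qo by auto
  have "d dvd (c - cc q)" using key_dvd[OF de c1(3) cop] .
  hence cc: "c = cc q" using dvd_small[OF d0] c0 c1 by fastforce
  have "(a - ca q) * d = 0" using de c1(3) cc by (simp add: algebra_simps)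
  hence "a = ca q" using d0 by simp
  hence "mk_psl (a,b,c,d) = cg q" unfolding cg_def using qo cc by simp
  thus ?thesis using Pcanon by simp
qed

lemma mul_U: "a*d - b*c = 1 \<Longrightarrow> pmul (mk_psl (a,b,c,d)) U = mk_psl (-b, a+b, -d, c+d)"
  by (simp add: U_mk pmul_mk)
lemma mul_UU: "a*d - b*c = 1 \<Longrightarrow> pmul (mk_psl (a,b,c,d)) (pmul U U) = mk_psl (-a-b, a, -c-d, c)"
  by (simp add: UU_mk pmul_mk)
lemma mul_S: "a*d - b*c = 1 \<Longrightarrow> pmul (mk_psl (a,b,c,d)) S = mk_psl (b, -a, d, -c)"
  by (simp add: S_mk pmul_mk)
lemma mk_neg': "a*d - b*c = 1 \<Longrightarrow> mk_psl (-a,-b,-c,-d) = mk_psl (a,b,c,d)"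
  using mk_neg[of "(a,b,c,d)"] by simp

lemma L2:
  assumes IH: "\<And>a b c d. a*d - b*c = 1 \<Longrightarrow> max \<bar>c\<bar> \<bar>d\<bar> < d0 \<Longrightarrow> Eg (mk_psl (a,b,c,d)) \<in> Ksp"
  and de: "a*d0 - b*c = 1" and d0: "d0 > 0" and c0: "-d0 \<le> c" "c < 0"
  shows "Eg (mk_psl (a,b,c,d0)) \<in> Ksp"
proof -
  define d where "d = d0"
  note de = de[folded d_def] and d0' = d0[folded d_def] and c0 = c0[folded d_def]
  define q where "q = (of_int b / of_int d :: rat)"
  have qo: "quotient_of q = (b,d)" unfolding q_def using quot_bd[OF de d0'] .
  have cop: "coprime b d" using coprime_det[of b "-c" "-a" d] de by (simp add: algebra_simps)
  have c1: "0 \<le> cc q" "cc q < d" "ca q * d - b * cc q = 1" using canon[of q] qo by auto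
  define c' where "c' = cc q"
  define a' where "a' = ca q"
  have c1': "0 \<le> c'" "c' < d" "a' * d - b * c' = 1" using c1 unfolding c'_def a'_def by auto
  have "d dvd (c - c')" using key_dvd[OF de c1'(3) cop] .
  hence "d dvd (c - c' + d)" by simp
  hence "c - c' + d = 0" using dvd_small[OF d0'] c0 c1' by fastforce
  hence cc: "c = c' - d" by simp
  have "(a - (a' - b)) * d = 0" using de c1'(3) cc by (simp add: algebra_simps)
  hence aa: "a = a' - b" using d0' by simp
  have g: "mk_psl (a,b,c,d) = mk_psl (a'-b, b, c'-d, d)" using aa cc by simp
  have de2: "(a'-b)*d - b*(c'-d) = 1" using c1'(3) by (simp add: algebra_simps)
  have cgq: "cg q = mk_psl (a', b, c', d)" unfolding cg_def a'_def c'_def using qo by simp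
  have "pmul (mk_psl (a'-b, b, c'-d, d)) U = mk_psl (-b, a', -d, c')"
    using mul_U[OF de2] by simp
  also have "\<dots> = mk_psl (b, -a', d, -c')"
    using mk_neg'[of b "-c'" "-a'" d] c1'(3) by (simp add: algebra_simps)
  also have "\<dots> = pmul (cg q) S" using mul_S[OF c1'(3)] cgq by simp
  finally have e1: "Eg (pmul (mk_psl (a'-b, b, c'-d, d)) U) \<in> Ksp"
    using PS Pcanon by simp
  have "pmul (mk_psl (a'-b, b, c'-d, d)) (pmul U U) = mk_psl (-a', a'-b, -c', c'-d)"
    using mul_UU[OF de2] by simp
  also have "\<dots> = mk_psl (a', b-a', c', d-c')"
    using mk_neg'[of a' "d-c'" "b-a'" c'] c1'(3) by (simp add: algebra_simps)
  finally have e2': "pmul (mk_psl (a'-b, b, c'-d, d)) (pmul U U) = mk_psl (a', b-a', c', d-c')" .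
  have de3: "a'*(d-c') - (b-a')*c' = 1" using c1'(3) by (simp add: algebra_simps)
  have "Eg (mk_psl (a', b-a', c', d-c')) \<in> Ksp"
  proof (cases "c' = 0")
    case True
    show ?thesis using L1[OF de3] True d0' by simp
  next
    case False
    hence "max \<bar>c'\<bar> \<bar>d-c'\<bar> < d0" using c1' d_def by auto
    thus ?thesis using IH[OF de3] by simp
  qed
  hence e2: "Eg (pmul (mk_psl (a'-b, b, c'-d, d)) (pmul U U)) \<in> Ksp" using e2' by simp
  show ?thesis using PU[OF e1 e2] g d_def by simp
qed

lemma Lpos:
  assumes IH: "\<And>a b c d. a*d - b*c = 1 \<Longrightarrow> max \<bar>c\<bar> \<bar>d\<bar> < d0 \<Longrightarrow> Eg (mk_psl (a,b,c,d)) \<in> Ksp"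
  and de: "a*d0 - b*c = 1" and d0: "d0 > 0" and c0: "-d0 \<le> c" "c < d0"
  shows "Eg (mk_psl (a,b,c,d0)) \<in> Ksp"
proof (cases "c \<ge> 0")
  case True show ?thesis by (rule L1[OF de d0 True c0(2)])
next
  case False thus ?thesis using L2[OF IH de d0 c0(1)] by simp
qed

lemma Pall_n: "\<forall>a b c d. a*d - b*c = 1 \<longrightarrow> nat (max \<bar>c\<bar> \<bar>d\<bar>) = n \<longrightarrow> Eg (mk_psl (a,b,c,d)) \<in> Ksp"
proof (induction n rule: less_induct)
  case (less n)
  have IH: "\<And>a b c d. a*d - b*c = 1 \<Longrightarrow> max \<bar>c\<bar> \<bar>d\<bar> < int n \<Longrightarrow> Eg (mk_psl (a,b,c,d)) \<in> Ksp"
  proof -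
    fix a b c d :: int assume "a*d - b*c = 1" "max \<bar>c\<bar> \<bar>d\<bar> < int n"
    hence "nat (max \<bar>c\<bar> \<bar>d\<bar>) < n" by auto
    thus "Eg (mk_psl (a,b,c,d)) \<in> Ksp" using less.IH \<open>a*d - b*c = 1\<close> by blast
  qed
  have Li: "Eg (mk_psl (a,b,c,d)) \<in> Ksp"
    if de: "a*d - b*c = 1" and mx: "max \<bar>c\<bar> \<bar>d\<bar> = int n" and cd: "\<bar>c\<bar> < \<bar>d\<bar> \<or> c = -d" for a b c d
  proof -
    have "d \<noteq> 0" using de cd by auto
    show ?thesis
    proof (cases "d > 0")
      case True
      have "max \<bar>c\<bar> \<bar>d\<bar> = d" using cd True by auto
      thus ?thesis using Lpos[of d a b c] IH de True cd mx by auto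
    next
      case False
      hence dn: "-d > 0" using \<open>d \<noteq> 0\<close> by simp
      have de': "(-a)*(-d) - (-b)*(-c) = 1" using de by simp
      have "max \<bar>-c\<bar> \<bar>-d\<bar> = -d" using cd dn by auto
      hence "Eg (mk_psl (-a,-b,-c,-d)) \<in> Ksp" using Lpos[of "-d" "-a" "-b" "-c"] IH de' dn cd mx by auto
      thus ?thesis using mk_neg'[OF de] by simp
    qed
  qed
  show ?case
  proof (intro allI impI)
    fix a b c d :: int assume de: "a*d - b*c = 1" and mx0: "nat (max \<bar>c\<bar> \<bar>d\<bar>) = n"
    have mx: "max \<bar>c\<bar> \<bar>d\<bar> = int n" using mx0 by auto
    show "Eg (mk_psl (a,b,c,d)) \<in> Ksp"
    proof (cases "\<bar>c\<bar> < \<bar>d\<bar> \<or> c = -d")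
      case True thus ?thesis using Li de mx by blast
    next
      case False
      have de': "b*(-c) - (-a)*d = 1" using de by (simp add: algebra_simps)
      have "\<bar>d\<bar> < \<bar>-c\<bar> \<or> d = -(-c)" using False by auto
      moreover have "max \<bar>d\<bar> \<bar>-c\<bar> = int n" using mx by auto
      ultimately have "Eg (mk_psl (b,-a,d,-c)) \<in> Ksp" using Li[OF de'] by blast
      thus ?thesis using mul_S[OF de] PS[of "mk_psl (a,b,c,d)"] by simp
    qed
  qed
qed

lemma Pall: "Eg g \<in> Ksp"
proof -
  obtain m where m: "g = mk_psl m" "det4 m = 1" using psl_ex by metis
  obtain a b c d where "m = (a,b,c,d)" by (cases m)
  thus ?thesis using Pall_n m by auto
qed

definition Kset :: "(psl \<Rightarrow> int) set" where
  "Kset = {\<phi>. finite {a. \<phi> a \<noteq> 0} \<and> (\<forall>p. (\<Sum>a\<in>{a. \<phi> a \<noteq> 0}. \<phi> a * bdry a p) = 0)}"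

lemma manin: assumes "\<phi> \<in> Kset" shows "\<phi> \<in> Ksp"
proof -
  define A where "A = {a. \<phi> a \<noteq> 0}"
  have fA: "finite A" and cond: "\<And>p. (\<Sum>a\<in>A. \<phi> a * bdry a p) = 0"
    using assms unfolding Kset_def A_def by auto
  define B where "B = (\<lambda>a. act a Inf) ` A \<union> (\<lambda>a. act a (Fin 0)) ` A"
  have fB: "finite B" unfolding B_def using fA by simp
  have zero: "(\<Sum>a\<in>A. \<phi> a * (Fm (act a Inf) z - Fm (act a (Fin 0)) z)) = 0" for z
  proof -
    have inner: "(\<Sum>p\<in>B. Fm p z * bdry a p) = Fm (act a Inf) z - Fm (act a (Fin 0)) z" if "a \<in> A" for a
    proof -
      have pw: "\<And>p. Fm p z * bdry a p = (if act a Inf = p then Fm p z else 0) - (if act a (Fin 0) = p then Fm p z else 0)"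
        by (auto simp: bdry_def)
      have "(\<Sum>p\<in>B. Fm p z * bdry a p) =
          (\<Sum>p\<in>B. (if act a Inf = p then Fm p z else 0)) - (\<Sum>p\<in>B. (if act a (Fin 0) = p then Fm p z else 0))"
        unfolding pw by (rule sum_subtractf)
      also have "\<dots> = Fm (act a Inf) z - Fm (act a (Fin 0)) z"
        using that fB by (simp add: B_def)
      finally show ?thesis .
    qed
    have "(\<Sum>a\<in>A. \<phi> a * (Fm (act a Inf) z - Fm (act a (Fin 0)) z)) = (\<Sum>a\<in>A. \<phi> a * (\<Sum>p\<in>B. Fm p z * bdry a p))"
      using inner by simp
    also have "\<dots> = (\<Sum>p\<in>B. Fm p z * (\<Sum>a\<in>A. \<phi> a * bdry a p))"
      by (simp add: sum_distrib_left sum_distrib_right algebra_simps sum.swap[of _ A B])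
    also have "\<dots> = 0" using cond by simp
    finally show ?thesis .
  qed
  have phi: "\<phi> = (\<lambda>z. \<Sum>a\<in>A. (- \<phi> a) * Eg a z)"
  proof
    fix z
    have "(\<Sum>a\<in>A. \<phi> a * dl a z) = (\<Sum>a\<in>A. if z = a then \<phi> a else 0)"
      by (rule sum.cong) (auto simp: dl_def)
    also have "\<dots> = (if z \<in> A then \<phi> z else 0)" using fA by simp
    also have "\<dots> = \<phi> z" by (simp add: A_def)
    finally have "\<phi> z = (\<Sum>a\<in>A. \<phi> a * dl a z)" by simp
    also have "\<dots> = (\<Sum>a\<in>A. \<phi> a * (Fm (act a Inf) z - Fm (act a (Fin 0)) z)) - (\<Sum>a\<in>A. \<phi> a * Eg a z)"
      unfolding Eg_def by (simp add: algebra_simps sum_subtractf sum.distrib)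
    also have "\<dots> = (\<Sum>a\<in>A. (- \<phi> a) * Eg a z)" using zero by (simp add: sum_negf)
    finally show "\<phi> z = (\<Sum>a\<in>A. (- \<phi> a) * Eg a z)" .
  qed
  show ?thesis by (subst phi) (rule Ksp_sum[OF fA Pall])
qed


lemma pmul2_simp[simp]: "pmul2 (a,b) (c,d) = (pmul a c, pmul b d)" by (simp add: pmul2_def)
lemma pinv2_simp[simp]: "pinv2 (a,b) = (pinv a, pinv b)" by (simp add: pinv2_def)

lemma pmul2_inv_l[simp]: "pmul2 (pinv2 y) (pmul2 y w) = w"
  by (cases y; cases w) simp
lemma pmul2_inv_r[simp]: "pmul2 y (pmul2 (pinv2 y) w) = w"
  by (cases y; cases w) simp
lemma pmul2_cancel[simp]: "pmul2 y w = pmul2 y w' \<longleftrightarrow> w = w'"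
  by (metis pmul2_inv_l)
lemma pmul2_eq_iff: "pmul2 (pinv2 y) z = w \<longleftrightarrow> z = pmul2 y w"
  by (metis pmul2_inv_l pmul2_inv_r)
lemma pmul2_one[simp]: "pmul2 y (pone,pone) = y" by (cases y) simp
lemma pmul2_one_l[simp]: "pmul2 (pone,pone) y = y" by (cases y) simp

definition Sm :: "(psl \<times> psl \<Rightarrow> int) \<Rightarrow> (psl \<times> psl \<Rightarrow> bool) \<Rightarrow> (psl \<times> psl \<Rightarrow> int) \<Rightarrow> int" where
  "Sm f Q h = (\<Sum>x\<in>{x. f x \<noteq> 0 \<and> Q x}. f x * h x)"

lemma Sm_sub:
  assumes "finite B" "{x. f x \<noteq> 0} \<subseteq> B"
  shows "Sm f Q h = (\<Sum>x\<in>B. if Q x then f x * h x else 0)"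
proof -
  have "Sm f Q h = (\<Sum>x\<in>{x\<in>B. Q x}. f x * h x)"
    unfolding Sm_def by (rule sum.mono_neutral_left) (use assms in auto)
  also have "\<dots> = (\<Sum>x\<in>B. if Q x then f x * h x else 0)"
    using assms(1) by (simp add: sum.inter_filter)
  finally show ?thesis .
qed

lemma ZG_iff: "f \<in> ZG \<longleftrightarrow> finite {x. f x \<noteq> 0}" by (simp add: ZG_def)

lemma ZG_add: "f \<in> ZG \<Longrightarrow> g \<in> ZG \<Longrightarrow> f + g \<in> ZG"
  unfolding ZG_def by (auto intro: finite_subset[of _ "{x. f x \<noteq> 0} \<union> {x. g x \<noteq> 0}"])
lemma ZG_scal: "f \<in> ZG \<Longrightarrow> (\<lambda>z. k * f z) \<in> ZG"
  unfolding ZG_def by (auto intro: finite_subset[of _ "{x. f x \<noteq> 0}"])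
lemma ZG_zero: "(\<lambda>_. 0) \<in> ZG" unfolding ZG_def by simp
lemma ZG_delta: "delta w \<in> ZG" unfolding ZG_def delta_def by simp

lemma Sm_add:
  assumes "f \<in> ZG" "g \<in> ZG" shows "Sm (f + g) Q h = Sm f Q h + Sm g Q h"
proof -
  define B where "B = {x. f x \<noteq> 0} \<union> {x. g x \<noteq> 0}"
  have fB: "finite B" using assms unfolding B_def ZG_def by simp
  have "Sm (f + g) Q h = (\<Sum>x\<in>B. if Q x then (f + g) x * h x else 0)"
    by (rule Sm_sub[OF fB]) (auto simp: B_def)
  also have "\<dots> = (\<Sum>x\<in>B. if Q x then f x * h x else 0) + (\<Sum>x\<in>B. if Q x then g x * h x else 0)"
    by (simp add: sum.distrib[symmetric] algebra_simps if_distrib cong: if_cong)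
  also have "\<dots> = Sm f Q h + Sm g Q h"
    using Sm_sub[OF fB, of f] Sm_sub[OF fB, of g] by (auto simp: B_def)
  finally show ?thesis .
qed

lemma Sm_scal:
  assumes "f \<in> ZG" shows "Sm (\<lambda>z. k * f z) Q h = k * Sm f Q h"
proof -
  define B where "B = {x. f x \<noteq> 0}"
  have fB: "finite B" using assms unfolding B_def ZG_def by simp
  have "Sm (\<lambda>z. k * f z) Q h = (\<Sum>x\<in>B. if Q x then k * f x * h x else 0)"
    by (rule Sm_sub[OF fB]) (auto simp: B_def)
  also have "\<dots> = k * (\<Sum>x\<in>B. if Q x then f x * h x else 0)"
    by (simp add: sum_distrib_left if_distrib algebra_simps cong: if_cong)
  also have "\<dots> = k * Sm f Q h"
    using Sm_sub[OF fB, of f] by (auto simp: B_def)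
  finally show ?thesis .
qed

lemma Sm_zero: "Sm (\<lambda>_. 0) Q h = 0" by (simp add: Sm_def)

lemma Sm_cong: "(\<And>x. Q x = Q' x) \<Longrightarrow> (\<And>x. h x = h' x) \<Longrightarrow> Sm f Q h = Sm f Q' h'"
  unfolding Sm_def by simp

definition shift :: "psl \<times> psl \<Rightarrow> (psl \<times> psl \<Rightarrow> int) \<Rightarrow> psl \<times> psl \<Rightarrow> int" where
  "shift y f = (\<lambda>z. f (pmul2 (pinv2 y) z))"

lemma shift_delta: "shift y (delta w) = delta (pmul2 y w)"
  unfolding shift_def delta_def by (auto simp: pmul2_eq_iff)
lemma shift_add: "shift y (f + g) = shift y f + shift y g"
  unfolding shift_def by auto
lemma shift_diff: "shift y (f - g) = shift y f - shift y g"
  unfolding shift_def by auto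

lemma image_pmul2: "x \<in> pmul2 y ` A \<longleftrightarrow> pmul2 (pinv2 y) x \<in> A"
proof
  assume "x \<in> pmul2 y ` A" thus "pmul2 (pinv2 y) x \<in> A" by auto
next
  assume "pmul2 (pinv2 y) x \<in> A"
  thus "x \<in> pmul2 y ` A" by (intro image_eqI[of _ _ "pmul2 (pinv2 y) x"]) simp_all
qed

lemma ZG_shift: "f \<in> ZG \<Longrightarrow> shift y f \<in> ZG"
proof -
  assume "f \<in> ZG"
  hence "finite (pmul2 y ` {x. f x \<noteq> 0})" by (simp add: ZG_def)
  moreover have "{x. shift y f x \<noteq> 0} = pmul2 y ` {x. f x \<noteq> 0}"
    unfolding shift_def by (rule set_eqI) (simp only: image_pmul2 mem_Collect_eq)
  ultimately show ?thesis by (simp add: ZG_def)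
qed

lemma Sm_shift: "Sm (shift y f) Q h = Sm f (\<lambda>w. Q (pmul2 y w)) (\<lambda>w. h (pmul2 y w))"
proof -
  have e: "{x. shift y f x \<noteq> 0 \<and> Q x} = pmul2 y ` {w. f w \<noteq> 0 \<and> Q (pmul2 y w)}"
    unfolding shift_def by (rule set_eqI) (simp only: image_pmul2 mem_Collect_eq pmul2_inv_r)
  have inj: "inj_on (pmul2 y) A" for A by (auto intro: inj_onI)
  show ?thesis unfolding Sm_def e by (simp add: sum.reindex[OF inj] shift_def)
qed

lemma gmul_shift: "gmul r x = (\<lambda>z. \<Sum>y\<in>{y. r y \<noteq> 0}. r y * shift y x z)"
  unfolding gmul_def shift_def by simp

lemma gmul_delta: "gmul (delta y) g = shift y g"
  unfolding gmul_shift delta_def by (simp add: shift_def)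

lemma J_shift: "g \<in> left_ideal G \<Longrightarrow> shift y g \<in> left_ideal G"
  using left_ideal.lmult[OF ZG_delta, of g G y] gmul_delta by simp

lemma J_scal: "g \<in> left_ideal G \<Longrightarrow> (\<lambda>z. k * g z) \<in> left_ideal G"
proof -
  assume g: "g \<in> left_ideal G"
  define r where "r = (\<lambda>z. k * delta (pone,pone) z)"
  have r: "r \<in> ZG" unfolding r_def using ZG_scal[OF ZG_delta] .
  have "gmul r g = (\<lambda>z. k * g z)"
  proof (cases "k = 0")
    case True thus ?thesis unfolding gmul_def r_def by simp
  next
    case False
    hence "{y. r y \<noteq> 0} = {(pone,pone)}" unfolding r_def delta_def by auto
    thus ?thesis unfolding gmul_def by (simp add: r_def delta_def)
  qed
  thus ?thesis using left_ideal.lmult[OF r g] by simp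
qed

lemma J_neg: "g \<in> left_ideal G \<Longrightarrow> -g \<in> left_ideal G"
proof -
  assume "g \<in> left_ideal G"
  hence "(\<lambda>z. (-1) * g z) \<in> left_ideal G" by (rule J_scal)
  moreover have "(\<lambda>z. (-1) * g z) = -g" by auto
  ultimately show ?thesis by simp
qed

lemma J_diff: "f \<in> left_ideal G \<Longrightarrow> g \<in> left_ideal G \<Longrightarrow> f - g \<in> left_ideal G"
proof -
  assume "f \<in> left_ideal G" "g \<in> left_ideal G"
  hence "f + (-g) \<in> left_ideal G" by (intro left_ideal.add J_neg)
  thus ?thesis by (simp only: diff_conv_add_uminus)
qed

lemma J_gen_shift: "g \<in> G \<Longrightarrow> shift y g \<in> left_ideal G"
  by (rule J_shift[OF left_ideal.gen])

lemma ideal_incl: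
  fixes I :: "(psl \<times> psl \<Rightarrow> int) set"
  assumes comb: "\<And>(A::(psl\<times>psl) set) u c. finite A \<Longrightarrow> (\<forall>y\<in>A. u y \<in> I) \<Longrightarrow> (\<lambda>z. \<Sum>y\<in>A. c y * u y z) \<in> I"
  and shift: "\<And>f y. f \<in> I \<Longrightarrow> shift y f \<in> I"
  and gens: "G \<subseteq> I"
  and zero: "(\<lambda>_. 0) \<in> I"
  and add: "\<And>f g. f \<in> I \<Longrightarrow> g \<in> I \<Longrightarrow> f + g \<in> I"
  shows "left_ideal G \<subseteq> I"
proof
  fix x assume "x \<in> left_ideal G"
  thus "x \<in> I"
  proof (induction rule: left_ideal.induct)
    case (gen g) thus ?case using gens by auto
  next
    case zero thus ?case using assms(4) by simp
  next
    case (add x y) thus ?case using assms(5) by blast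
  next
    case (lmult r x)
    have "(\<lambda>z. \<Sum>y\<in>{y. r y \<noteq> 0}. r y * shift y x z) \<in> I"
      using comb[of "{y. r y \<noteq> 0}" "\<lambda>y. shift y x" r] lmult shift by (auto simp: ZG_def)
    thus ?case by (simp add: gmul_shift)
  qed
qed

lemma comb_Sm:
  assumes "finite A" "\<forall>y\<in>A. u y \<in> ZG \<and> (\<forall>i\<in>Ix. Sm (u y) (Q i) (h i) = 0)"
  shows "(\<lambda>z. \<Sum>y\<in>A. c y * u y z) \<in> ZG \<and> (\<forall>i\<in>Ix. Sm (\<lambda>z. \<Sum>y\<in>A. c y * u y z) (Q i) (h i) = 0)"
  using assms
proof (induction A rule: finite_induct)
  case empty thus ?case by (simp add: ZG_zero Sm_zero)
next
  case (insert a F)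
  have e: "(\<lambda>z. \<Sum>y\<in>insert a F. c y * u y z) = (\<lambda>z. c a * u a z) + (\<lambda>z. \<Sum>y\<in>F. c y * u y z)"
    using insert by auto
  have IH: "(\<lambda>z. \<Sum>y\<in>F. c y * u y z) \<in> ZG \<and> (\<forall>i\<in>Ix. Sm (\<lambda>z. \<Sum>y\<in>F. c y * u y z) (Q i) (h i) = 0)"
    using insert by auto
  have ua: "u a \<in> ZG" "\<forall>i\<in>Ix. Sm (u a) (Q i) (h i) = 0" using insert by auto
  show ?case unfolding e
    using IH ua ZG_add[OF ZG_scal[OF ua(1)]] Sm_add[OF ZG_scal[OF ua(1)]] Sm_scal[OF ua(1)] by auto
qed

section \<open>Fibre lemma\<close>

definition Lf :: "(psl \<Rightarrow> psl \<times> psl) \<Rightarrow> (psl \<Rightarrow> int) \<Rightarrow> psl \<times> psl \<Rightarrow> int" where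
  "Lf \<iota> \<phi> = (\<lambda>z. if z \<in> range \<iota> then \<phi> (inv \<iota> z) else 0)"

lemma Lf_add: "Lf \<iota> (x + y) = Lf \<iota> x + Lf \<iota> y" unfolding Lf_def by auto
lemma Lf_neg: "Lf \<iota> (- x) = - Lf \<iota> x" unfolding Lf_def by auto
lemma Lf_zero: "Lf \<iota> (\<lambda>_. 0) = (\<lambda>_. 0)" unfolding Lf_def by auto
lemma Lf_dl: "inj \<iota> \<Longrightarrow> Lf \<iota> (dl g) = delta (\<iota> g)"
proof (rule ext)
  fix z assume inj: "inj \<iota>"
  show "Lf \<iota> (dl g) z = delta (\<iota> g) z"
  proof (cases "z \<in> range \<iota>")
    case True then obtain w where "z = \<iota> w" by auto
    thus ?thesis using inj by (simp add: Lf_def dl_def delta_def inj_eq inv_f_f)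
  next
    case False thus ?thesis by (auto simp: Lf_def delta_def)
  qed
qed

lemma fibre:
  assumes inj: "inj \<iota>"
  and g1: "\<And>\<gamma>. delta (\<iota> \<gamma>) + delta (\<iota> (pmul \<gamma> S)) \<in> left_ideal G"
  and g2: "\<And>\<gamma>. delta (\<iota> \<gamma>) + delta (\<iota> (pmul \<gamma> U)) + delta (\<iota> (pmul \<gamma> (pmul U U))) \<in> left_ideal G"
  and phi: "\<phi> \<in> Ksp"
  shows "Lf \<iota> \<phi> \<in> left_ideal G"
  using phi
proof (induction rule: Ksp.induct)
  case K0 thus ?case using left_ideal.zero by (simp add: Lf_zero)
next
  case (Kadd x y) thus ?case using left_ideal.add[OF Kadd.IH] by (metis Lf_add)
next
  case (Kneg x) thus ?case using J_neg[OF Kneg.IH] by (metis Lf_neg)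
next
  case (KS g)
  have "Lf \<iota> (dl g + dl (pmul g S)) = delta (\<iota> g) + delta (\<iota> (pmul g S))"
    by (simp only: Lf_add Lf_dl[OF inj])
  thus ?case using g1 by metis
next
  case (KU g)
  have "Lf \<iota> (dl g + dl (pmul g U) + dl (pmul g (pmul U U))) = delta (\<iota> g) + delta (\<iota> (pmul g U)) + delta (\<iota> (pmul g (pmul U U)))"
    by (simp only: Lf_add Lf_dl[OF inj])
  thus ?case using g2 by metis
qed

section \<open>Powers and cosets\<close>

lemma ppow_0[simp]: "ppow g 0 = pone" by (simp add: ppow_def)

lemma ppow_succ: "ppow g (n + 1) = pmul g (ppow g n)"
proof (cases "n \<ge> 0")
  case True
  hence "nat (n+1) = Suc (nat n)" by simp
  thus ?thesis using True by (simp add: ppow_def)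
next
  case False
  hence e: "nat (-n) = Suc (nat (-(n+1)))" by simp
  show ?thesis
  proof (cases "n + 1 = 0")
    case True
    hence "nat (-n) = Suc 0" by simp
    thus ?thesis using True by (simp add: ppow_def)
  next
    case F2: False
    hence "\<not> 0 \<le> n + 1" using False by simp
    thus ?thesis using False e by (simp add: ppow_def)
  qed
qed

lemma ppow_add: "ppow g (m + n) = pmul (ppow g m) (ppow g n)"
proof (induction m rule: int_induct[where k=0])
  case base thus ?case by simp
next
  case (step1 i)
  have "ppow g (i + 1 + n) = ppow g ((i + n) + 1)" by (simp add: algebra_simps)
  thus ?case using step1 by (simp add: ppow_succ)
next
  case (step2 i)
  have a: "ppow g (i + n) = pmul g (ppow g (i - 1 + n))" using ppow_succ[of g "i - 1 + n"] by simp
  have b: "ppow g i = pmul g (ppow g (i - 1))" using ppow_succ[of g "i - 1"] by simp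
  show ?case using step2 a b by simp
qed

lemma ppow_1[simp]: "ppow g 1 = g" using ppow_succ[of g 0] by simp

lemma ppow_neg: "pinv (ppow g n) = ppow g (-n)"
  by (rule pinv_unique) (simp add: ppow_add[symmetric])

definition Hs :: "psl \<Rightarrow> psl set" where "Hs h = {ppow h n | n. True}"

lemma Hs_one: "pone \<in> Hs h" unfolding Hs_def by (auto intro: exI[of _ 0])
lemma Hs_mul: "k \<in> Hs h \<Longrightarrow> k' \<in> Hs h \<Longrightarrow> pmul k k' \<in> Hs h"
  unfolding Hs_def by (auto simp: ppow_add[symmetric])
lemma Hs_inv: "k \<in> Hs h \<Longrightarrow> pinv k \<in> Hs h"
  unfolding Hs_def by (auto simp: ppow_neg)
lemma Hs_h: "h \<in> Hs h" unfolding Hs_def by (auto intro: exI[of _ 1])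

lemma mem_lcoset: "x \<in> lcoset g H \<longleftrightarrow> pmul (pinv g) x \<in> H"
proof
  assume "x \<in> lcoset g H" thus "pmul (pinv g) x \<in> H" unfolding lcoset_def by auto
next
  assume "pmul (pinv g) x \<in> H" thus "x \<in> lcoset g H" unfolding lcoset_def
    by (intro CollectI exI[of _ "pmul (pinv g) x"]) simp
qed

lemma lcoset_self: "g \<in> lcoset g (Hs h)"
  using Hs_one by (simp add: mem_lcoset)

lemma lcoset_eq: "x \<in> lcoset g (Hs h) \<Longrightarrow> lcoset x (Hs h) = lcoset g (Hs h)"
proof -
  assume "x \<in> lcoset g (Hs h)"
  hence k: "pmul (pinv g) x \<in> Hs h" by (simp add: mem_lcoset)
  show ?thesis
  proof (rule set_eqI)
    fix z
    have e1: "pmul (pinv g) z = pmul (pmul (pinv g) x) (pmul (pinv x) z)" by simp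
    have e2: "pmul (pinv x) z = pmul (pinv (pmul (pinv g) x)) (pmul (pinv g) z)" by simp
    show "z \<in> lcoset x (Hs h) \<longleftrightarrow> z \<in> lcoset g (Hs h)"
      unfolding mem_lcoset
      by (metis e1 e2 k Hs_mul Hs_inv)
  qed
qed

lemma mem_lcoset_mul: "pmul b x \<in> lcoset g H \<longleftrightarrow> x \<in> lcoset (pmul (pinv b) g) H"
  by (simp add: mem_lcoset)


lemma S_ne: "S \<noteq> pone" by (simp add: S_mk pone_mk mk_eq_iff)
lemma U_ne: "U \<noteq> pone" by (simp add: U_mk pone_mk mk_eq_iff)
lemma UU_ne: "pmul U U \<noteq> pone" by (simp add: UU_mk pone_mk mk_eq_iff)
lemma U_UU_ne: "U \<noteq> pmul U U"
proof -
  have "pmul U U = mk_psl (-1,1,-1,0)" by (rule UU_mk)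
  thus ?thesis by (simp only:) (simp add: U_mk mk_eq_iff)
qed
lemma T_ne: "T \<noteq> pone" by (simp add: T_mk pone_mk mk_eq_iff)
lemma US_mk: "pmul U S = mk_psl (1,0,1,1)" by (simp add: U_mk S_mk pmul_mk)
lemma US_ne: "pmul U S \<noteq> pone" by (simp add: US_mk pone_mk mk_eq_iff)

lemma act_pone_Inf: "act pone Inf = Inf" by simp

lemma bdry_S: "bdry pone p + bdry S p = 0"
  unfolding bdry_def by (auto simp: act_S_Inf act_S_0)
lemma bdry_U: "bdry pone p + bdry U p + bdry (pmul U U) p = 0"
  unfolding bdry_def by (auto simp: act_U_Inf act_U_0 act_UU_Inf act_UU_0)

lemma Sm_two: "x1 \<noteq> x2 \<Longrightarrow> Sm (delta x1 + delta x2) Q h = (if Q x1 then h x1 else 0) + (if Q x2 then h x2 else 0)"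
  by (subst Sm_sub[of "{x1,x2}"]) (auto simp: delta_def)
lemma Sm_diff2: "x1 \<noteq> x2 \<Longrightarrow> Sm (delta x1 - delta x2) Q h = (if Q x1 then h x1 else 0) - (if Q x2 then h x2 else 0)"
  by (subst Sm_sub[of "{x1,x2}"]) (auto simp: delta_def)
lemma Sm_three: "x1 \<noteq> x2 \<Longrightarrow> x1 \<noteq> x3 \<Longrightarrow> x2 \<noteq> x3 \<Longrightarrow>
   Sm (delta x1 + delta x2 + delta x3) Q h = (if Q x1 then h x1 else 0) + (if Q x2 then h x2 else 0) + (if Q x3 then h x3 else 0)"
  by (subst Sm_sub[of "{x1,x2,x3}"]) (auto simp: delta_def)

lemma ZG_diff: "f \<in> ZG \<Longrightarrow> g \<in> ZG \<Longrightarrow> f - g \<in> ZG"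
  unfolding ZG_def by (auto intro: finite_subset[of _ "{x. f x \<noteq> 0} \<union> {x. g x \<noteq> 0}"])

lemma Sm_diff: "f \<in> ZG \<Longrightarrow> g \<in> ZG \<Longrightarrow> Sm (f - g) Q h = Sm f Q h - Sm g Q h"
proof -
  assume f: "f \<in> ZG" and g: "g \<in> ZG"
  have e: "f - g = f + (\<lambda>z. (-1) * g z)" by auto
  show ?thesis unfolding e using Sm_add[OF f ZG_scal[OF g], of "-1" Q h] Sm_scal[OF g, of "-1" Q h] by simp
qed

locale coord =
  fixes pr :: "psl \<Rightarrow> psl \<Rightarrow> psl \<times> psl" and bd ky :: "psl \<times> psl \<Rightarrow> psl" and h :: psl
  assumes bd_pr[simp]: "bd (pr a b) = a" and ky_pr[simp]: "ky (pr a b) = b"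
  and pr_bd_ky[simp]: "pr (bd x) (ky x) = x"
  and pmul2_pr[simp]: "pmul2 (pr a b) (pr c d) = pr (pmul a c) (pmul b d)"
  and h_ne: "h \<noteq> pone"
begin

definition Iset :: "(psl \<times> psl \<Rightarrow> int) set" where
  "Iset = {f \<in> ZG. \<forall>C \<in> {lcoset g (Hs h) | g. True}. \<forall>p. Sm f (\<lambda>x. ky x \<in> C) (\<lambda>x. bdry (bd x) p) = 0}"

definition Gs :: "(psl \<times> psl \<Rightarrow> int) set" where
  "Gs = {delta (pr pone pone) + delta (pr S pone),
         delta (pr pone pone) + delta (pr U pone) + delta (pr (pmul U U) pone),
         delta (pr pone pone) - delta (pr pone h)}"

lemma pr_inj[simp]: "pr a b = pr c d \<longleftrightarrow> a = c \<and> b = d"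
  by (metis bd_pr ky_pr)

lemma ky_mul: "ky (pmul2 y w) = pmul (ky y) (ky w)"
  by (metis pr_bd_ky pmul2_pr ky_pr)
lemma bd_mul: "bd (pmul2 y w) = pmul (bd y) (bd w)"
  by (metis pr_bd_ky pmul2_pr bd_pr)

lemma Iset_add: "f \<in> Iset \<Longrightarrow> g \<in> Iset \<Longrightarrow> f + g \<in> Iset"
  unfolding Iset_def using ZG_add Sm_add by auto
lemma Iset_scal: "f \<in> Iset \<Longrightarrow> (\<lambda>z. k * f z) \<in> Iset"
  unfolding Iset_def using ZG_scal Sm_scal by auto
lemma Iset_diff: "f \<in> Iset \<Longrightarrow> g \<in> Iset \<Longrightarrow> f - g \<in> Iset"
  unfolding Iset_def using ZG_diff Sm_diff by auto
lemma Iset_zero: "(\<lambda>_. 0) \<in> Iset"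
  unfolding Iset_def using ZG_zero Sm_zero by auto

lemma Iset_comb: "finite A \<Longrightarrow> \<forall>y\<in>A. u y \<in> Iset \<Longrightarrow> (\<lambda>z. \<Sum>y\<in>A. c y * u y z) \<in> Iset"
proof (induction A rule: finite_induct)
  case empty thus ?case using Iset_zero by simp
next
  case (insert a F)
  have e: "(\<lambda>z. \<Sum>y\<in>insert a F. c y * u y z) = (\<lambda>z. c a * u a z) + (\<lambda>z. \<Sum>y\<in>F. c y * u y z)"
    using insert by auto
  show ?case unfolding e using insert Iset_add Iset_scal by simp
qed

lemma Iset_shift: "f \<in> Iset \<Longrightarrow> shift y f \<in> Iset"
proof -
  assume f: "f \<in> Iset"
  have fz: "f \<in> ZG" using f unfolding Iset_def by simp
  show ?thesis unfolding Iset_def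
  proof (intro CollectI conjI ballI allI)
    show "shift y f \<in> ZG" using ZG_shift[OF fz] .
  next
    fix C p assume "C \<in> {lcoset g (Hs h) | g. True}"
    then obtain g where C: "C = lcoset g (Hs h)" by auto
    have "Sm (shift y f) (\<lambda>x. ky x \<in> C) (\<lambda>x. bdry (bd x) p) =
          Sm f (\<lambda>w. ky w \<in> lcoset (pmul (pinv (ky y)) g) (Hs h)) (\<lambda>w. bdry (bd w) (act (pinv (bd y)) p))"
      unfolding Sm_shift C by (rule Sm_cong) (simp_all add: ky_mul bd_mul mem_lcoset_mul bdry_pmul)
    also have "\<dots> = 0" using f unfolding Iset_def by blast
    finally show "Sm (shift y f) (\<lambda>x. ky x \<in> C) (\<lambda>x. bdry (bd x) p) = 0" .
  qed
qed

lemma one_in_iff_h: "pone \<in> lcoset g (Hs h) \<longleftrightarrow> h \<in> lcoset g (Hs h)"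
proof -
  have "pmul (pinv g) h = pmul (pmul (pinv g) pone) h" by simp
  have a: "k \<in> Hs h \<Longrightarrow> pmul k h \<in> Hs h" for k using Hs_mul Hs_h by blast
  have b: "k \<in> Hs h \<Longrightarrow> pmul k (pinv h) \<in> Hs h" for k using Hs_mul Hs_inv Hs_h by blast
  show ?thesis unfolding mem_lcoset using a[of "pinv g"] b[of "pmul (pinv g) h"] by auto
qed

lemma gens_in: "Gs \<subseteq> Iset"
proof -
  have n1: "pr pone pone \<noteq> pr S pone" "pr pone pone \<noteq> pr U pone" "pr pone pone \<noteq> pr (pmul U U) pone"
    "pr U pone \<noteq> pr (pmul U U) pone" "pr pone pone \<noteq> pr pone h"
    using S_ne U_ne UU_ne U_UU_ne h_ne by (auto simp: eq_commute[of pone])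
  have z: "delta w \<in> ZG" for w by (rule ZG_delta)
  have g1: "delta (pr pone pone) + delta (pr S pone) \<in> Iset"
    unfolding Iset_def using ZG_add[OF z z] Sm_two[OF n1(1)] bdry_S by auto
  have g2: "delta (pr pone pone) + delta (pr U pone) + delta (pr (pmul U U) pone) \<in> Iset"
    unfolding Iset_def using ZG_add[OF ZG_add[OF z z] z] Sm_three[OF n1(2,3,4)] bdry_U by auto
  have g3: "delta (pr pone pone) - delta (pr pone h) \<in> Iset"
    unfolding Iset_def using ZG_diff[OF z z] Sm_diff2[OF n1(5)] one_in_iff_h by auto
  show ?thesis unfolding Gs_def using g1 g2 g3 by auto
qed

lemma J_sub: "left_ideal Gs \<subseteq> Iset"
  by (rule ideal_incl[OF Iset_comb Iset_shift gens_in Iset_zero Iset_add])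

end


lemma J_trans: "a - b \<in> left_ideal G \<Longrightarrow> b - c \<in> left_ideal G \<Longrightarrow> a - c \<in> left_ideal G"
proof -
  assume "a - b \<in> left_ideal G" "b - c \<in> left_ideal G"
  hence "(a - b) + (b - c) \<in> left_ideal G" by (rule left_ideal.add)
  moreover have "(a - b) + (b - c) = a - c" by (simp add: fun_eq_iff)
  ultimately show ?thesis by simp
qed

lemma J_sym: "a - b \<in> left_ideal G \<Longrightarrow> b - a \<in> left_ideal G"
proof -
  assume "a - b \<in> left_ideal G"
  hence "- (a - b) \<in> left_ideal G" by (rule J_neg)
  moreover have "- (a - b) = b - a" by (simp add: fun_eq_iff)
  ultimately show ?thesis by simp
qed

lemma J_refl: "a - a \<in> left_ideal G"
proof -
  have "a - a = (\<lambda>_. 0)" by (simp add: fun_eq_iff)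
  thus ?thesis using left_ideal.zero by simp
qed

context coord begin

lemma Gs_mem: "delta (pr pone pone) + delta (pr S pone) \<in> Gs"
  "delta (pr pone pone) + delta (pr U pone) + delta (pr (pmul U U) pone) \<in> Gs"
  "delta (pr pone pone) - delta (pr pone h) \<in> Gs"
  unfolding Gs_def by auto

lemma Jg1: "delta (pr a b) + delta (pr (pmul a S) b) \<in> left_ideal Gs"
proof -
  have "shift (pr a b) (delta (pr pone pone) + delta (pr S pone)) = delta (pr a b) + delta (pr (pmul a S) b)"
    by (simp only: shift_add shift_delta pmul2_pr pmul_pone2)
  thus ?thesis using J_gen_shift[OF Gs_mem(1), of "pr a b"] by simp
qed

lemma Jg2: "delta (pr a b) + delta (pr (pmul a U) b) + delta (pr (pmul a (pmul U U)) b) \<in> left_ideal Gs"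
proof -
  have "shift (pr a b) (delta (pr pone pone) + delta (pr U pone) + delta (pr (pmul U U) pone)) =
     delta (pr a b) + delta (pr (pmul a U) b) + delta (pr (pmul a (pmul U U)) b)"
    by (simp only: shift_add shift_delta pmul2_pr pmul_pone2)
  thus ?thesis using J_gen_shift[OF Gs_mem(2), of "pr a b"] by simp
qed

lemma Jg3: "delta (pr a b) - delta (pr a (pmul b h)) \<in> left_ideal Gs"
proof -
  have "shift (pr a b) (delta (pr pone pone) - delta (pr pone h)) = delta (pr a b) - delta (pr a (pmul b h))"
    by (simp only: shift_diff shift_delta pmul2_pr pmul_pone2)
  thus ?thesis using J_gen_shift[OF Gs_mem(3), of "pr a b"] by simp
qed

lemma Jpow: "\<forall>b. delta (pr a b) - delta (pr a (pmul b (ppow h n))) \<in> left_ideal Gs"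
proof (induction n rule: int_induct[where k=0])
  case base show ?case by (metis J_refl ppow_0 pmul_pone2)
next
  case (step1 i)
  show ?case
  proof
    fix b
    have "delta (pr a (pmul b h)) - delta (pr a (pmul (pmul b h) (ppow h i))) \<in> left_ideal Gs"
      using step1(2) by blast
    hence "delta (pr a (pmul b h)) - delta (pr a (pmul b (ppow h (i+1)))) \<in> left_ideal Gs"
      by (simp add: ppow_succ)
    thus "delta (pr a b) - delta (pr a (pmul b (ppow h (i+1)))) \<in> left_ideal Gs"
      using J_trans[OF Jg3] by blast
  qed
next
  case (step2 i)
  show ?case
  proof
    fix b
    have e: "ppow h (i - 1) = pmul (pinv h) (ppow h i)"
      using ppow_succ[of h "i - 1"] by simp
    have "delta (pr a (pmul b (pinv h))) - delta (pr a (pmul (pmul b (pinv h)) (ppow h i))) \<in> left_ideal Gs"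
      using step2(2) by blast
    hence 1: "delta (pr a (pmul b (pinv h))) - delta (pr a (pmul b (ppow h (i - 1)))) \<in> left_ideal Gs"
      by (simp add: e)
    have "delta (pr a (pmul b (pinv h))) - delta (pr a (pmul (pmul b (pinv h)) h)) \<in> left_ideal Gs"
      by (rule Jg3)
    hence "delta (pr a b) - delta (pr a (pmul b (pinv h))) \<in> left_ideal Gs"
      using J_sym by simp
    thus "delta (pr a b) - delta (pr a (pmul b (ppow h (i - 1)))) \<in> left_ideal Gs"
      using J_trans 1 by blast
  qed
qed

definition rep :: "psl \<Rightarrow> psl" where "rep b = (SOME g. g \<in> lcoset b (Hs h))"

lemma rep_mem: "rep b \<in> lcoset b (Hs h)"
  unfolding rep_def by (rule someI[of _ b]) (rule lcoset_self)

lemma rep_eq: "x \<in> lcoset b (Hs h) \<Longrightarrow> rep x = rep b"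
  unfolding rep_def using lcoset_eq by metis

lemma rep_idem: "rep (rep b) = rep b"
  using rep_eq[OF rep_mem] .

lemma Jrep: "delta (pr a b) - delta (pr a (rep b)) \<in> left_ideal Gs"
proof -
  have "pmul (pinv b) (rep b) \<in> Hs h" using rep_mem mem_lcoset by metis
  then obtain n where "pmul (pinv b) (rep b) = ppow h n" unfolding Hs_def by auto
  hence "rep b = pmul b (ppow h n)" by (metis pinv_r2)
  thus ?thesis using Jpow by simp
qed

lemma stageA:
  "card {x. f x \<noteq> 0} = n \<Longrightarrow> f \<in> Iset \<Longrightarrow> (\<forall>x. f x \<noteq> 0 \<longrightarrow> rep (ky x) = ky x) \<Longrightarrow> f \<in> left_ideal Gs"
proof (induction n arbitrary: f rule: less_induct)
  case (less n f)
  have fI: "f \<in> Iset" using less by simp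
  have fin: "finite {x. f x \<noteq> 0}" using fI unfolding Iset_def ZG_def by simp
  show ?case
  proof (cases "{x. f x \<noteq> 0} = {}")
    case True
    hence "f = (\<lambda>_. 0)" by auto
    thus ?thesis using left_ideal.zero by simp
  next
    case False
    then obtain x0 where x0: "f x0 \<noteq> 0" by auto
    define c where "c = ky x0"
    have rc: "rep c = c" using less.prems(3) x0 unfolding c_def by blast
    define \<iota> where "\<iota> = (\<lambda>a. pr a c)"
    have inj: "inj \<iota>" unfolding \<iota>_def by (auto intro: injI)
    define \<phi> where "\<phi> = (\<lambda>a. f (pr a c))"
    define A where "A = {a. \<phi> a \<noteq> 0}"
    have finA: "finite A"
    proof (rule finite_subset[OF _ finite_imageI[OF fin, of bd]])
      show "A \<subseteq> bd ` {x. f x \<noteq> 0}"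
      proof
        fix a assume "a \<in> A"
        hence "f (pr a c) \<noteq> 0" unfolding A_def \<phi>_def by simp
        thus "a \<in> bd ` {x. f x \<noteq> 0}" by (intro image_eqI[of _ bd "pr a c"]) simp_all
      qed
    qed
    have set: "{x. f x \<noteq> 0 \<and> ky x \<in> lcoset c (Hs h)} = \<iota> ` A"
    proof (rule set_eqI)
      fix x
      show "x \<in> {x. f x \<noteq> 0 \<and> ky x \<in> lcoset c (Hs h)} \<longleftrightarrow> x \<in> \<iota> ` A"
      proof
        assume "x \<in> {x. f x \<noteq> 0 \<and> ky x \<in> lcoset c (Hs h)}"
        hence fx: "f x \<noteq> 0" and kx: "ky x \<in> lcoset c (Hs h)" by auto
        have r1: "rep (ky x) = ky x" using less.prems(3) fx by blast
        have "rep (ky x) = rep c" using rep_eq[OF kx] .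
        hence kc: "ky x = c" using r1 rc by simp
        have xe: "x = pr (bd x) c" using pr_bd_ky[of x] kc by simp
        hence "x = \<iota> (bd x)" unfolding \<iota>_def .
        moreover have "bd x \<in> A" unfolding A_def \<phi>_def using fx xe by simp
        ultimately show "x \<in> \<iota> ` A" by blast
      next
        assume "x \<in> \<iota> ` A"
        then obtain a where a: "a \<in> A" "x = pr a c" unfolding \<iota>_def by auto
        have "f x \<noteq> 0" using a unfolding A_def \<phi>_def by simp
        moreover have "ky x \<in> lcoset c (Hs h)" using a(2) lcoset_self by simp
        ultimately show "x \<in> {x. f x \<noteq> 0 \<and> ky x \<in> lcoset c (Hs h)}" by simp
      qed
    qed
    have phiK: "\<phi> \<in> Kset"
      unfolding Kset_def
    proof (intro CollectI conjI allI)
      show "finite {a. \<phi> a \<noteq> 0}" using finA A_def by simp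
    next
      fix p
      have cm: "lcoset c (Hs h) \<in> {lcoset g (Hs h) | g. True}" by blast
      have "Sm f (\<lambda>x. ky x \<in> lcoset c (Hs h)) (\<lambda>x. bdry (bd x) p) = 0"
        using fI cm unfolding Iset_def by blast
      hence "0 = Sm f (\<lambda>x. ky x \<in> lcoset c (Hs h)) (\<lambda>x. bdry (bd x) p)" by simp
      also have "\<dots> = (\<Sum>x\<in>\<iota> ` A. f x * bdry (bd x) p)" unfolding Sm_def set ..
      also have "\<dots> = (\<Sum>a\<in>A. \<phi> a * bdry a p)"
      proof -
        have ij: "inj_on \<iota> A" by (rule inj_on_subset[OF inj]) simp
        show ?thesis unfolding sum.reindex[OF ij] by (simp add: \<iota>_def \<phi>_def)
      qed
      finally show "(\<Sum>a\<in>{a. \<phi> a \<noteq> 0}. \<phi> a * bdry a p) = 0" unfolding A_def by simp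
    qed
    have L: "Lf \<iota> \<phi> \<in> left_ideal Gs"
    proof (rule fibre[OF inj _ _ manin[OF phiK]])
      show "\<And>g. delta (\<iota> g) + delta (\<iota> (pmul g S)) \<in> left_ideal Gs" unfolding \<iota>_def by (rule Jg1)
      show "\<And>g. delta (\<iota> g) + delta (\<iota> (pmul g U)) + delta (\<iota> (pmul g (pmul U U))) \<in> left_ideal Gs"
        unfolding \<iota>_def by (rule Jg2)
    qed
    have Leq: "Lf \<iota> \<phi> = (\<lambda>z. if ky z = c then f z else 0)"
    proof (rule ext)
      fix z
      show "Lf \<iota> \<phi> z = (if ky z = c then f z else 0)"
      proof (cases "ky z = c")
        case True
        hence z: "z = \<iota> (bd z)" unfolding \<iota>_def by (metis pr_bd_ky)
        hence "z \<in> range \<iota>" by blast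
        moreover have "inv \<iota> z = bd z" by (subst z) (rule inv_f_f[OF inj])
        ultimately show ?thesis using True z unfolding Lf_def \<phi>_def \<iota>_def by simp
      next
        case False
        hence "z \<notin> range \<iota>" unfolding \<iota>_def by auto
        thus ?thesis using False unfolding Lf_def by simp
      qed
    qed
    define f2 where "f2 = f - Lf \<iota> \<phi>"
    have f2I: "f2 \<in> Iset" unfolding f2_def using Iset_diff[OF fI] J_sub L by blast
    have f2e: "f2 = (\<lambda>z. if ky z = c then 0 else f z)" unfolding f2_def Leq by (auto simp: fun_eq_iff)
    have "{x. f2 x \<noteq> 0} \<subset> {x. f x \<noteq> 0}"
      using x0 c_def unfolding f2e by auto
    hence "card {x. f2 x \<noteq> 0} < n" using psubset_card_mono[OF fin] less.prems(1) by simp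
    moreover have "\<forall>x. f2 x \<noteq> 0 \<longrightarrow> rep (ky x) = ky x" using less.prems(3) unfolding f2e by auto
    ultimately have "f2 \<in> left_ideal Gs" using less.IH f2I by blast
    hence "f2 + Lf \<iota> \<phi> \<in> left_ideal Gs" using L by (rule left_ideal.add)
    moreover have "f2 + Lf \<iota> \<phi> = f" unfolding f2_def by simp
    ultimately show ?thesis by simp
  qed
qed

lemma stageB:
  "card {x. f x \<noteq> 0 \<and> rep (ky x) \<noteq> ky x} = n \<Longrightarrow> f \<in> Iset \<Longrightarrow> f \<in> left_ideal Gs"
proof (induction n arbitrary: f rule: less_induct)
  case (less n f)
  have fI: "f \<in> Iset" using less by simp
  have fin: "finite {x. f x \<noteq> 0}" using fI unfolding Iset_def ZG_def by simp
  define N where "N = (\<lambda>f::psl\<times>psl\<Rightarrow>int. {x. f x \<noteq> 0 \<and> rep (ky x) \<noteq> ky x})"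
  have finN: "finite (N f)" unfolding N_def by (rule finite_subset[OF _ fin]) auto
  show ?case
  proof (cases "N f = {}")
    case True
    thus ?thesis using stageA[OF refl fI] unfolding N_def by auto
  next
    case False
    then obtain x where x: "x \<in> N f" by auto
    have fx: "f x \<noteq> 0" and rx: "rep (ky x) \<noteq> ky x" using x unfolding N_def by auto
    define x' where "x' = pr (bd x) (rep (ky x))"
    have xx': "x \<noteq> x'" unfolding x'_def using rx by (metis ky_pr)
    have e: "delta x - delta x' \<in> left_ideal Gs"
      using Jrep[of "bd x" "ky x"] unfolding x'_def by simp
    define g where "g = (\<lambda>z. f x * (delta x - delta x') z)"
    have gJ: "g \<in> left_ideal Gs" unfolding g_def by (rule J_scal[OF e])
    define f1 where "f1 = f - g"
    have f1I: "f1 \<in> Iset" unfolding f1_def using Iset_diff[OF fI] J_sub gJ by blast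
    have sub: "N f1 \<subseteq> N f - {x}"
    proof
      fix z assume z: "z \<in> N f1"
      hence fz: "f1 z \<noteq> 0" and rz: "rep (ky z) \<noteq> ky z" unfolding N_def by auto
      have "z \<noteq> x" using fz xx' unfolding f1_def g_def delta_def by auto
      moreover have "z \<noteq> x'"
      proof
        assume "z = x'"
        hence "rep (ky z) = ky z" unfolding x'_def by (simp add: rep_idem)
        thus False using rz by simp
      qed
      moreover have "f1 z = f z" using \<open>z \<noteq> x\<close> \<open>z \<noteq> x'\<close> unfolding f1_def g_def delta_def by simp
      ultimately show "z \<in> N f - {x}" using fz rz unfolding N_def by auto
    qed
    have c1: "card (N f - {x}) < card (N f)" by (rule card_Diff1_less[OF finN x])
    have "card (N f1) \<le> card (N f - {x})" by (rule card_mono[OF _ sub]) (use finN in simp)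
    hence "card (N f1) < card (N f)" using c1 by simp
    hence "f1 \<in> left_ideal Gs" using less.IH[OF _ refl f1I] less.prems(1) unfolding N_def by simp
    hence "f1 + g \<in> left_ideal Gs" using gJ by (rule left_ideal.add)
    moreover have "f1 + g = f" unfolding f1_def by simp
    ultimately show ?thesis by simp
  qed
qed

theorem Iset_eq: "Iset = left_ideal Gs"
  using J_sub stageB[OF refl] by blast

end


interpretation HH: coord Pair fst snd T
  by unfold_locales (auto simp: T_ne)

interpretation VV: coord "\<lambda>a b. (b,a)" snd fst "pmul U S"
  by unfold_locales (auto simp: US_ne)

lemma IH_eq: "I_H = left_ideal {delta (pone,pone) + delta (S,pone),
                           delta (pone,pone) + delta (U,pone) + delta (pmul U U,pone),
                           delta (pone,pone) - delta (pone,T)}"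
proof -
  have "I_H = HH.Iset" unfolding I_H_def HH.Iset_def Sm_def Gamma_inf_def Hs_def ..
  also have "\<dots> = left_ideal HH.Gs" by (rule HH.Iset_eq)
  finally show ?thesis unfolding HH.Gs_def .
qed

lemma IV_eq: "I_V = left_ideal {delta (pone,pone) + delta (pone,S),
                           delta (pone,pone) + delta (pone,U) + delta (pone,pmul U U),
                           delta (pone,pone) - delta (pmul U S,pone)}"
proof -
  have "I_V = VV.Iset" unfolding I_V_def VV.Iset_def Sm_def Gamma_0_def Hs_def ..
  also have "\<dots> = left_ideal VV.Gs" by (rule VV.Iset_eq)
  finally show ?thesis unfolding VV.Gs_def .
qed


definition key :: "psl \<times> psl \<Rightarrow> psl" where "key x = pmul (snd x) (pinv (fst x))"

definition GD :: "(psl \<times> psl \<Rightarrow> int) set" where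
  "GD = {delta (pone,pone) + delta (S,S),
         delta (pone,pone) + delta (U,U) + delta (pmul U U,pmul U U)}"

lemma ID_alt: "I_D = {f \<in> ZG. \<forall>g p. Sm f (\<lambda>x. key x = g) (\<lambda>x. bdry (fst x) p) = 0}"
  unfolding I_D_def Sm_def key_def ..

lemma ID_add: "f \<in> I_D \<Longrightarrow> g \<in> I_D \<Longrightarrow> f + g \<in> I_D"
  unfolding ID_alt using ZG_add Sm_add by auto
lemma ID_scal: "f \<in> I_D \<Longrightarrow> (\<lambda>z. k * f z) \<in> I_D"
  unfolding ID_alt using ZG_scal Sm_scal by auto
lemma ID_diff: "f \<in> I_D \<Longrightarrow> g \<in> I_D \<Longrightarrow> f - g \<in> I_D"
  unfolding ID_alt using ZG_diff Sm_diff by auto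
lemma ID_zero: "(\<lambda>_. 0) \<in> I_D"
  unfolding ID_alt using ZG_zero Sm_zero by auto

lemma ID_comb: "finite A \<Longrightarrow> \<forall>y\<in>A. u y \<in> I_D \<Longrightarrow> (\<lambda>z. \<Sum>y\<in>A. c y * u y z) \<in> I_D"
proof (induction A rule: finite_induct)
  case empty thus ?case using ID_zero by simp
next
  case (insert a F)
  have e: "(\<lambda>z. \<Sum>y\<in>insert a F. c y * u y z) = (\<lambda>z. c a * u a z) + (\<lambda>z. \<Sum>y\<in>F. c y * u y z)"
    using insert by auto
  show ?case unfolding e using insert ID_add ID_scal by simp
qed

lemma key_aux: "pmul b (pmul x (pinv a)) = g \<longleftrightarrow> x = pmul (pinv b) (pmul g a)"
proof -
  have "pmul b (pmul x (pinv a)) = g \<longleftrightarrow> pmul x (pinv a) = pmul (pinv b) g" by (rule pmul_eq_iff)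
  also have "\<dots> \<longleftrightarrow> x = pmul (pmul (pinv b) g) (pinv (pinv a))" by (rule pmul_eq_iff2)
  finally show ?thesis by simp
qed

lemma key_mul: "key (pmul2 y w) = g \<longleftrightarrow> key w = pmul (pinv (snd y)) (pmul g (fst y))"
proof -
  obtain a b where y: "y = (a,b)" by (cases y)
  obtain c d where w: "w = (c,d)" by (cases w)
  have "key (pmul2 y w) = pmul b (pmul (pmul d (pinv c)) (pinv a))" unfolding key_def y w by simp
  thus ?thesis using key_aux[of b "pmul d (pinv c)" a g] unfolding key_def y w by simp
qed

lemma fst_pmul2: "fst (pmul2 y w) = pmul (fst y) (fst w)" by (simp add: pmul2_def)

lemma ID_shift: "f \<in> I_D \<Longrightarrow> shift y f \<in> I_D"
proof -
  assume f: "f \<in> I_D"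
  have fz: "f \<in> ZG" using f unfolding ID_alt by simp
  show ?thesis unfolding ID_alt
  proof (intro CollectI conjI allI)
    show "shift y f \<in> ZG" using ZG_shift[OF fz] .
  next
    fix g p
    have "Sm (shift y f) (\<lambda>x. key x = g) (\<lambda>x. bdry (fst x) p) =
          Sm f (\<lambda>w. key w = pmul (pinv (snd y)) (pmul g (fst y))) (\<lambda>w. bdry (fst w) (act (pinv (fst y)) p))"
      unfolding Sm_shift by (rule Sm_cong) (simp_all add: key_mul bdry_pmul fst_pmul2)
    also have "\<dots> = 0" using f unfolding ID_alt by blast
    finally show "Sm (shift y f) (\<lambda>x. key x = g) (\<lambda>x. bdry (fst x) p) = 0" .
  qed
qed

lemma GD_in: "GD \<subseteq> I_D"
proof -
  have n1: "(pone,pone) \<noteq> (S,S)" "(pone,pone) \<noteq> (U,U)" "(pone,pone) \<noteq> (pmul U U, pmul U U)"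
    "(U,U) \<noteq> (pmul U U, pmul U U)"
    using S_ne U_ne UU_ne U_UU_ne by (auto simp: eq_commute[of pone])
  have z: "delta w \<in> ZG" for w by (rule ZG_delta)
  have k: "key (pone,pone) = pone" "key (S,S) = pone" "key (U,U) = pone" "key (pmul U U, pmul U U) = pone"
    unfolding key_def by simp_all
  have g1: "delta (pone,pone) + delta (S,S) \<in> I_D"
    unfolding ID_alt using ZG_add[OF z z] Sm_two[OF n1(1)] bdry_S k by auto
  have g2: "delta (pone,pone) + delta (U,U) + delta (pmul U U, pmul U U) \<in> I_D"
    unfolding ID_alt using ZG_add[OF ZG_add[OF z z] z] Sm_three[OF n1(2,3,4)] bdry_U k by auto
  show ?thesis unfolding GD_def using g1 g2 by auto
qed

lemma JD_sub: "left_ideal GD \<subseteq> I_D"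
  by (rule ideal_incl[OF ID_comb ID_shift GD_in ID_zero ID_add])

lemma JDg1: "delta (a, pmul g a) + delta (pmul a S, pmul g (pmul a S)) \<in> left_ideal GD"
proof -
  have "shift (a, pmul g a) (delta (pone,pone) + delta (S,S)) = delta (a, pmul g a) + delta (pmul a S, pmul g (pmul a S))"
    by (simp only: shift_add shift_delta pmul2_simp pmul_pone2 pmul_assoc)
  moreover have "delta (pone,pone) + delta (S,S) \<in> GD" unfolding GD_def by simp
  ultimately show ?thesis using J_gen_shift by metis
qed

lemma JDg2: "delta (a, pmul g a) + delta (pmul a U, pmul g (pmul a U)) + delta (pmul a (pmul U U), pmul g (pmul a (pmul U U))) \<in> left_ideal GD"
proof -
  have "shift (a, pmul g a) (delta (pone,pone) + delta (U,U) + delta (pmul U U, pmul U U)) =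
     delta (a, pmul g a) + delta (pmul a U, pmul g (pmul a U)) + delta (pmul a (pmul U U), pmul g (pmul a (pmul U U)))"
    by (simp only: shift_add shift_delta pmul2_simp pmul_pone2 pmul_assoc)
  moreover have "delta (pone,pone) + delta (U,U) + delta (pmul U U, pmul U U) \<in> GD" unfolding GD_def by simp
  ultimately show ?thesis using J_gen_shift by metis
qed

lemma stageD: "card {x. f x \<noteq> 0} = n \<Longrightarrow> f \<in> I_D \<Longrightarrow> f \<in> left_ideal GD"
proof (induction n arbitrary: f rule: less_induct)
  case (less n f)
  have fI: "f \<in> I_D" using less by simp
  have fin: "finite {x. f x \<noteq> 0}" using fI unfolding ID_alt ZG_def by simp
  show ?case
  proof (cases "{x. f x \<noteq> 0} = {}")
    case True
    hence "f = (\<lambda>_. 0)" by auto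
    thus ?thesis using left_ideal.zero by simp
  next
    case False
    then obtain x0 where x0: "f x0 \<noteq> 0" by auto
    define c where "c = key x0"
    define \<iota> where "\<iota> = (\<lambda>a. (a, pmul c a))"
    have inj: "inj \<iota>" unfolding \<iota>_def by (auto intro: injI)
    have kiota: "key (\<iota> a) = c" for a unfolding \<iota>_def key_def by simp
    have kinv: "key z = c \<Longrightarrow> z = \<iota> (fst z)" for z
    proof -
      assume "key z = c"
      hence "snd z = pmul c (fst z)" unfolding key_def by (simp add: pmul_eq_iff2)
      thus "z = \<iota> (fst z)" unfolding \<iota>_def by (cases z) simp
    qed
    define \<phi> where "\<phi> = (\<lambda>a. f (\<iota> a))"
    define A where "A = {a. \<phi> a \<noteq> 0}"
    have finA: "finite A"
    proof (rule finite_subset[OF _ finite_imageI[OF fin, of fst]])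
      show "A \<subseteq> fst ` {x. f x \<noteq> 0}"
      proof
        fix a assume "a \<in> A"
        hence "f (\<iota> a) \<noteq> 0" unfolding A_def \<phi>_def by simp
        thus "a \<in> fst ` {x. f x \<noteq> 0}" by (intro image_eqI[of _ fst "\<iota> a"]) (simp_all add: \<iota>_def)
      qed
    qed
    have set: "{x. f x \<noteq> 0 \<and> key x = c} = \<iota> ` A"
    proof (rule set_eqI)
      fix x
      show "x \<in> {x. f x \<noteq> 0 \<and> key x = c} \<longleftrightarrow> x \<in> \<iota> ` A"
      proof
        assume "x \<in> {x. f x \<noteq> 0 \<and> key x = c}"
        hence fx: "f x \<noteq> 0" and kx: "key x = c" by auto
        have xe: "x = \<iota> (fst x)" by (rule kinv[OF kx])
        moreover have "fst x \<in> A" unfolding A_def \<phi>_def using fx xe by simp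
        ultimately show "x \<in> \<iota> ` A" by blast
      next
        assume "x \<in> \<iota> ` A"
        then obtain a where a: "a \<in> A" "x = \<iota> a" by auto
        have "f x \<noteq> 0" using a unfolding A_def \<phi>_def by simp
        moreover have "key x = c" using a(2) kiota by simp
        ultimately show "x \<in> {x. f x \<noteq> 0 \<and> key x = c}" by simp
      qed
    qed
    have phiK: "\<phi> \<in> Kset"
      unfolding Kset_def
    proof (intro CollectI conjI allI)
      show "finite {a. \<phi> a \<noteq> 0}" using finA A_def by simp
    next
      fix p
      have "Sm f (\<lambda>x. key x = c) (\<lambda>x. bdry (fst x) p) = 0"
        using fI unfolding ID_alt by blast
      hence "0 = Sm f (\<lambda>x. key x = c) (\<lambda>x. bdry (fst x) p)" by simp
      also have "\<dots> = (\<Sum>x\<in>\<iota> ` A. f x * bdry (fst x) p)" unfolding Sm_def set ..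
      also have "\<dots> = (\<Sum>a\<in>A. \<phi> a * bdry a p)"
      proof -
        have ij: "inj_on \<iota> A" by (rule inj_on_subset[OF inj]) simp
        show ?thesis unfolding sum.reindex[OF ij] by (simp add: \<iota>_def \<phi>_def)
      qed
      finally show "(\<Sum>a\<in>{a. \<phi> a \<noteq> 0}. \<phi> a * bdry a p) = 0" unfolding A_def by simp
    qed
    have L: "Lf \<iota> \<phi> \<in> left_ideal GD"
    proof (rule fibre[OF inj _ _ manin[OF phiK]])
      show "\<And>g. delta (\<iota> g) + delta (\<iota> (pmul g S)) \<in> left_ideal GD" unfolding \<iota>_def by (rule JDg1)
      show "\<And>g. delta (\<iota> g) + delta (\<iota> (pmul g U)) + delta (\<iota> (pmul g (pmul U U))) \<in> left_ideal GD"
        unfolding \<iota>_def by (rule JDg2)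
    qed
    have Leq: "Lf \<iota> \<phi> = (\<lambda>z. if key z = c then f z else 0)"
    proof (rule ext)
      fix z
      show "Lf \<iota> \<phi> z = (if key z = c then f z else 0)"
      proof (cases "key z = c")
        case True
        hence z: "z = \<iota> (fst z)" by (rule kinv)
        hence "z \<in> range \<iota>" by blast
        moreover have "inv \<iota> z = fst z" by (subst z) (rule inv_f_f[OF inj])
        ultimately show ?thesis using True z unfolding Lf_def \<phi>_def by metis
      next
        case False
        hence "z \<notin> range \<iota>" using kiota by auto
        thus ?thesis using False unfolding Lf_def by simp
      qed
    qed
    define f2 where "f2 = f - Lf \<iota> \<phi>"
    have f2I: "f2 \<in> I_D" unfolding f2_def using ID_diff[OF fI] JD_sub L by blast
    have f2e: "f2 = (\<lambda>z. if key z = c then 0 else f z)" unfolding f2_def Leq by (auto simp: fun_eq_iff)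
    have "{x. f2 x \<noteq> 0} \<subset> {x. f x \<noteq> 0}"
      using x0 c_def unfolding f2e by auto
    hence "card {x. f2 x \<noteq> 0} < n" using psubset_card_mono[OF fin] less.prems(1) by simp
    hence "f2 \<in> left_ideal GD" using less.IH f2I by blast
    hence "f2 + Lf \<iota> \<phi> \<in> left_ideal GD" using L by (rule left_ideal.add)
    moreover have "f2 + Lf \<iota> \<phi> = f" unfolding f2_def by simp
    ultimately show ?thesis by simp
  qed
qed

lemma ID_eq: "I_D = left_ideal {delta (pone,pone) + delta (S,S),
                           delta (pone,pone) + delta (U,U) + delta (pmul U U,pmul U U)}"
  using JD_sub stageD[OF refl] unfolding GD_def by blast


theorem mainTheorem5:
  shows "I_H = left_ideal {delta (pone,pone) + delta (S,pone),
                           delta (pone,pone) + delta (U,pone) + delta (pmul U U,pone),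
                           delta (pone,pone) - delta (pone,T)}
       \<and> I_V = left_ideal {delta (pone,pone) + delta (pone,S),
                           delta (pone,pone) + delta (pone,U) + delta (pone,pmul U U),
                           delta (pone,pone) - delta (pmul U S,pone)}
       \<and> I_D = left_ideal {delta (pone,pone) + delta (S,S),
                           delta (pone,pone) + delta (U,U) + delta (pmul U U,pmul U U)}"
  using IH_eq IV_eq ID_eq by blast

end
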